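(* Let $H_0,H_1$ be complex Hilbert spaces, $G$ a densely defined closed operator from $H_0$ into $H_1$ and $D$ a densely defined closed operator from $H_1$ into $H_0$ with $-G^*\subset D$. Let $H$ be a Hilbert space and $\kappa\in\mathcal L(\mathrm{BD}(G),H)$ injective with dense range, and let $a\in\mathcal L(H_1)$, $m\in\mathcal L(H_0)$ be coercive. Then the Dirichlet-to-Neumann operator $\Lambda_H$ in $H$ associated with $-DaG+m$ is invertible and \[ \Lambda_H^{-1}\psi=\kappa\begin{pmatrix}\pi_{\mathrm{BD}(G)} & 0\end{pmatrix}\begin{pmatrix} m & -\mathring D\\ -G & a^{-1}\end{pmatrix}^{-1}\begin{pmatrix} I\\ -a^{-1}G\end{pmatrix}\kappa^*\psi \] for all $\psi\in H$, where the matrix operator acts in $H_0\times H_1$ with domain $\mathrm{dom}(G)\times\mathrm{dom}(\mathring D)$ (and is invertible).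
   Context: $\mathring D=-G^*$, $\mathring G=-D^*$. Domains carry graph inner products. $\mathrm{BD}(G)$ (resp. $\mathrm{BD}(D)$) is the orthogonal complement of $\mathrm{dom}(\mathring G)$ in $\mathrm{dom}(G)$ (resp. of $\mathrm{dom}(\mathring D)$ in $\mathrm{dom}(D)$) with induced inner products; $\pi_{\mathrm{BD}(G)},\pi_{\mathrm{BD}(D)}$ are the orthogonal projections. $G$ maps $\mathrm{BD}(G)$ into $\mathrm{BD}(D)$. Coercive: $\mathrm{Re}(Mx,x)\ge\mu\|x\|^2$ for some $\mu>0$. For coercive $a,m$ and $u_0\in\mathrm{BD}(G)$ there is a unique $u\in\mathrm{dom}(G)$ with $aGu\in\mathrm{dom}(D)$, $mu-DaGu=0$, $u-u_0\in\mathrm{dom}(\mathring G)$; $\Lambda u_0=\pi_{\mathrm{BD}(D)}(aGu)$. $\kappa^*\colon H\to\mathrm{BD}(G)$ is the adjoint of $\kappa$. $\Lambda_H$: $\varphi\in\mathrm{dom}(\Lambda_H)$, $\Lambda_H\varphi=\psi$ iff there is $u_0\in\mathrm{BD}(G)$ with $\kappa(u_0)=\varphi$ and $\Lambda u_0=G\kappa^*\psi$. *)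

theory Defs
  imports "HOL-Analysis.Analysis"
begin

class complex_vector = real_vector +
  fixes scaleC :: "complex \<Rightarrow> 'a \<Rightarrow> 'a"
  assumes scaleC_add_right: "scaleC c (x + y) = scaleC c x + scaleC c y"
    and scaleC_add_left: "scaleC (c + d) x = scaleC c x + scaleC d x"
    and scaleC_scaleC: "scaleC c (scaleC d x) = scaleC (c * d) x"
    and scaleC_one: "scaleC 1 x = x"
    and scaleR_scaleC: "scaleR r x = scaleC (complex_of_real r) x"

class complex_inner = complex_vector + real_normed_vector +
  fixes cinner :: "'a \<Rightarrow> 'a \<Rightarrow> complex"
  assumes cinner_commute: "cinner x y = cnj (cinner y x)"
    and cinner_add_left: "cinner (x + y) z = cinner x z + cinner y z"
    and cinner_scaleC_left: "cinner (scaleC c x) y = cnj c * cinner x y"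
    and cinner_nonneg: "Im (cinner x x) = 0 \<and> Re (cinner x x) \<ge> 0"
    and cinner_eq_zero_iff: "cinner x x = 0 \<longleftrightarrow> x = 0"
    and norm_eq_sqrt_cinner: "norm x = sqrt (Re (cinner x x))"

class chilbert_space = complex_inner + complete_space

definition csubspace :: "'a::complex_vector set \<Rightarrow> bool" where
  "csubspace S \<longleftrightarrow> 0 \<in> S \<and> (\<forall>x\<in>S. \<forall>y\<in>S. x + y \<in> S) \<and> (\<forall>c. \<forall>x\<in>S. scaleC c x \<in> S)"

definition clinear_on :: "'a::complex_vector set \<Rightarrow> ('a \<Rightarrow> 'b::complex_vector) \<Rightarrow> bool" where
  "clinear_on S f \<longleftrightarrow> csubspace S \<and> (\<forall>x\<in>S. \<forall>y\<in>S. f (x + y) = f x + f y)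
     \<and> (\<forall>c. \<forall>x\<in>S. f (scaleC c x) = scaleC c (f x))"

definition bounded_clinear_op :: "('a::complex_inner \<Rightarrow> 'b::complex_inner) \<Rightarrow> bool" where
  "bounded_clinear_op f \<longleftrightarrow> clinear_on UNIV f \<and> (\<exists>K. \<forall>x. norm (f x) \<le> K * norm x)"

definition densely_defined_closed :: "'a::complex_inner set \<Rightarrow> ('a \<Rightarrow> 'b::complex_inner) \<Rightarrow> bool" where
  "densely_defined_closed Sd f \<longleftrightarrow> clinear_on Sd f \<and> closure Sd = UNIV
     \<and> closed {(x, f x) | x. x \<in> Sd}"

definition adj_dom :: "'a::complex_inner set \<Rightarrow> ('a \<Rightarrow> 'b::complex_inner) \<Rightarrow> 'b set" where
  "adj_dom Sd f = {y. \<exists>z. \<forall>x\<in>Sd. cinner (f x) y = cinner x z}"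

definition adj :: "'a::complex_inner set \<Rightarrow> ('a \<Rightarrow> 'b::complex_inner) \<Rightarrow> 'b \<Rightarrow> 'a" where
  "adj Sd f y = (THE z. \<forall>x\<in>Sd. cinner (f x) y = cinner x z)"

definition op_subset :: "'a set \<Rightarrow> ('a \<Rightarrow> 'b) \<Rightarrow> 'a set \<Rightarrow> ('a \<Rightarrow> 'b) \<Rightarrow> bool" where
  "op_subset domA A domB B \<longleftrightarrow> domA \<subseteq> domB \<and> (\<forall>x\<in>domA. B x = A x)"

definition ginner :: "('a::complex_inner \<Rightarrow> 'b::complex_inner) \<Rightarrow> 'a \<Rightarrow> 'a \<Rightarrow> complex" where
  "ginner f x y = cinner x y + cinner (f x) (f y)"

definition gnorm :: "('a::complex_inner \<Rightarrow> 'b::complex_inner) \<Rightarrow> 'a \<Rightarrow> real" where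
  "gnorm f x = sqrt ((norm x)\<^sup>2 + (norm (f x))\<^sup>2)"

definition coercive :: "('a::complex_inner \<Rightarrow> 'a) \<Rightarrow> bool" where
  "coercive M \<longleftrightarrow> (\<exists>\<mu>>0. \<forall>x. Re (cinner (M x) x) \<ge> \<mu> * (norm x)\<^sup>2)"

text \<open>\<open>\<mathring>D = -G\<^sup>*\<close>, \<open>\<mathring>G = -D\<^sup>*\<close>.\<close>
definition Dc_dom :: "'a::complex_inner set \<Rightarrow> ('a \<Rightarrow> 'b::complex_inner) \<Rightarrow> 'b set" where
  "Dc_dom domG G = adj_dom domG G"
definition Dc :: "'a::complex_inner set \<Rightarrow> ('a \<Rightarrow> 'b::complex_inner) \<Rightarrow> 'b \<Rightarrow> 'a" where
  "Dc domG G y = - adj domG G y"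
definition Gc_dom :: "'b::complex_inner set \<Rightarrow> ('b \<Rightarrow> 'a::complex_inner) \<Rightarrow> 'a set" where
  "Gc_dom domD D = adj_dom domD D"
definition Gc :: "'b::complex_inner set \<Rightarrow> ('b \<Rightarrow> 'a::complex_inner) \<Rightarrow> 'a \<Rightarrow> 'b" where
  "Gc domD D x = - adj domD D x"

definition BD_G :: "'a::complex_inner set \<Rightarrow> ('a \<Rightarrow> 'b::complex_inner) \<Rightarrow> 'b set \<Rightarrow> ('b \<Rightarrow> 'a) \<Rightarrow> 'a set" where
  "BD_G domG G domD D = {x \<in> domG. \<forall>y\<in>Gc_dom domD D. ginner G x y = 0}"

definition BD_D :: "'a::complex_inner set \<Rightarrow> ('a \<Rightarrow> 'b::complex_inner) \<Rightarrow> 'b set \<Rightarrow> ('b \<Rightarrow> 'a) \<Rightarrow> 'b set" where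
  "BD_D domG G domD D = {y \<in> domD. \<forall>z\<in>Dc_dom domG G. ginner D y z = 0}"

definition gproj :: "'a set \<Rightarrow> ('a::complex_inner \<Rightarrow> 'b::complex_inner) \<Rightarrow> 'a \<Rightarrow> 'a" where
  "gproj S f v = (THE w. w \<in> S \<and> (\<forall>z\<in>S. ginner f (v - w) z = 0))"

definition kappa_adj :: "'a::complex_inner set \<Rightarrow> ('a \<Rightarrow> 'b::complex_inner) \<Rightarrow> 'b set \<Rightarrow> ('b \<Rightarrow> 'a)
    \<Rightarrow> ('a \<Rightarrow> 'c::complex_inner) \<Rightarrow> 'c \<Rightarrow> 'a" where
  "kappa_adj domG G domD D \<kappa> \<psi> =
     (THE f. f \<in> BD_G domG G domD D \<and> (\<forall>u\<in>BD_G domG G domD D. cinner (\<kappa> u) \<psi> = ginner G u f))"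

definition dir_sol :: "'a::complex_inner set \<Rightarrow> ('a \<Rightarrow> 'b::complex_inner) \<Rightarrow> 'b set \<Rightarrow> ('b \<Rightarrow> 'a)
    \<Rightarrow> ('b \<Rightarrow> 'b) \<Rightarrow> ('a \<Rightarrow> 'a) \<Rightarrow> 'a \<Rightarrow> 'a" where
  "dir_sol domG G domD D a m u0 =
     (THE u. u \<in> domG \<and> a (G u) \<in> domD \<and> m u - D (a (G u)) = 0 \<and> u - u0 \<in> Gc_dom domD D)"

definition DtN :: "'a::complex_inner set \<Rightarrow> ('a \<Rightarrow> 'b::complex_inner) \<Rightarrow> 'b set \<Rightarrow> ('b \<Rightarrow> 'a)
    \<Rightarrow> ('b \<Rightarrow> 'b) \<Rightarrow> ('a \<Rightarrow> 'a) \<Rightarrow> 'a \<Rightarrow> 'b" where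
  "DtN domG G domD D a m u0 =
     gproj (BD_D domG G domD D) D (a (G (dir_sol domG G domD D a m u0)))"

text \<open>The Dirichlet-to-Neumann operator \<open>\<Lambda>\<^sub>H\<close> in \<open>H\<close>, as a relation (graph): \<open>(\<phi>,\<psi>) \<in> \<Lambda>\<^sub>H\<close> iff
  \<open>\<phi> \<in> dom(\<Lambda>\<^sub>H)\<close> and \<open>\<Lambda>\<^sub>H \<phi> = \<psi>\<close>.\<close>
definition DtN_H :: "'a::complex_inner set \<Rightarrow> ('a \<Rightarrow> 'b::complex_inner) \<Rightarrow> 'b set \<Rightarrow> ('b \<Rightarrow> 'a)
    \<Rightarrow> ('b \<Rightarrow> 'b) \<Rightarrow> ('a \<Rightarrow> 'a) \<Rightarrow> ('a \<Rightarrow> 'c::complex_inner) \<Rightarrow> ('c \<times> 'c) set" where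
  "DtN_H domG G domD D a m \<kappa> =
     {(\<phi>, \<psi>). \<exists>u0\<in>BD_G domG G domD D. \<kappa> u0 = \<phi> \<and>
         DtN domG G domD D a m u0 = G (kappa_adj domG G domD D \<kappa> \<psi>)}"

definition block_dom :: "'a::complex_inner set \<Rightarrow> ('a \<Rightarrow> 'b::complex_inner) \<Rightarrow> ('a \<times> 'b) set" where
  "block_dom domG G = domG \<times> Dc_dom domG G"

definition block_op :: "'a::complex_inner set \<Rightarrow> ('a \<Rightarrow> 'b::complex_inner) \<Rightarrow> ('b \<Rightarrow> 'b) \<Rightarrow> ('a \<Rightarrow> 'a)
    \<Rightarrow> 'a \<times> 'b \<Rightarrow> 'a \<times> 'b" where
  "block_op domG G a m = (\<lambda>(u, q). (m u - Dc domG G q, - G u + inv a q))"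

definition block_inv :: "'a::complex_inner set \<Rightarrow> ('a \<Rightarrow> 'b::complex_inner) \<Rightarrow> ('b \<Rightarrow> 'b) \<Rightarrow> ('a \<Rightarrow> 'a)
    \<Rightarrow> 'a \<times> 'b \<Rightarrow> 'a \<times> 'b" where
  "block_inv domG G a m y = (THE x. x \<in> block_dom domG G \<and> block_op domG G a m x = y)"

end

theory Submission
  imports Defs
begin

lemma scaleC_zero_left[simp]: "scaleC 0 x = (0::'a::complex_vector)"
  using scaleR_scaleC[of 0 x] by simp
lemma scaleC_minus1: "scaleC (-1) x = - (x::'a::complex_vector)"
  using scaleR_scaleC[of "-1" x] by simp
lemma scaleC_zero_right[simp]: "scaleC c 0 = (0::'a::complex_vector)"
  using scaleC_add_right[of c 0 0] by simp
lemma scaleC_minus_right: "scaleC c (- x) = - scaleC c (x::'a::complex_vector)"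
proof -
  have "scaleC c x + scaleC c (-x) = 0" using scaleC_add_right[of c x "-x"] by simp
  from minus_unique[OF this] show ?thesis by simp
qed
lemma scaleC_diff_right: "scaleC c (x - y) = scaleC c x - scaleC c (y::'a::complex_vector)"
  using scaleC_add_right[of c x "-y"] by (simp add: scaleC_minus_right)
lemma scaleC_minus_left: "scaleC (- c) x = - scaleC c (x::'a::complex_vector)"
  using scaleC_scaleC[of "-1" c x] by (simp add: scaleC_minus1)
lemma scaleC_diff_left: "scaleC (c - d) x = scaleC c x - scaleC d (x::'a::complex_vector)"
  using scaleC_add_left[of c "-d" x] by (simp add: scaleC_minus_left)
lemma cinner_add_right: "cinner x (y + z) = cinner x y + cinner x (z::'a::complex_inner)"
  by (subst (1 2 3) cinner_commute) (simp add: cinner_add_left)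
lemma cinner_scaleC_right: "cinner x (scaleC c y) = c * cinner x (y::'a::complex_inner)"
  by (subst (1 2) cinner_commute) (simp add: cinner_scaleC_left)
lemma cinner_zero_left[simp]: "cinner 0 y = (0::complex)"
  using cinner_add_left[of 0 0 y] by simp
lemma cinner_zero_right[simp]: "cinner x 0 = (0::complex)"
  by (subst cinner_commute) simp
lemma cinner_minus_left: "cinner (- x) y = - cinner x (y::'a::complex_inner)"
  using cinner_scaleC_left[of "-1" x y] by (simp add: scaleC_minus1)
lemma cinner_minus_right: "cinner x (- y) = - cinner x (y::'a::complex_inner)"
  by (subst (1 2) cinner_commute) (simp add: cinner_minus_left)
lemma cinner_diff_left: "cinner (x - y) z = cinner x z - cinner y (z::'a::complex_inner)"
  using cinner_add_left[of x "-y" z] by (simp add: cinner_minus_left)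
lemma cinner_diff_right: "cinner x (y - z) = cinner x y - cinner x (z::'a::complex_inner)"
  using cinner_add_right[of x y "-z"] by (simp add: cinner_minus_right)

lemmas cinner_simps = cinner_add_left cinner_add_right cinner_diff_left cinner_diff_right
  cinner_minus_left cinner_minus_right cinner_scaleC_left cinner_scaleC_right

lemma Re_cinner_self: "Re (cinner x x) = (norm (x::'a::complex_inner))\<^sup>2"
  using cinner_nonneg[of x] norm_eq_sqrt_cinner[of x] by simp

lemma cinner_self: "cinner x x = complex_of_real ((norm (x::'a::complex_inner))\<^sup>2)"
  using cinner_nonneg[of x] Re_cinner_self[of x] by (simp add: complex_eq_iff)

lemma cnj_mult_self: "cnj c * c = complex_of_real ((cmod c)\<^sup>2)"
  by (metis complex_norm_square mult.commute)

lemma norm_sq_eq_Re: "(norm (x::'a::complex_inner))\<^sup>2 = Re (cinner x x)"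
  by (simp add: Re_cinner_self)

lemma norm_scaleC: "norm (scaleC c x) = cmod c * norm (x::'a::complex_inner)"
proof -
  have "cinner (scaleC c x) (scaleC c x) = (cnj c * c) * cinner x x"
    by (simp add: cinner_scaleC_left cinner_scaleC_right mult.assoc)
  then have "Re (cinner (scaleC c x) (scaleC c x)) = (cmod c)\<^sup>2 * (norm x)\<^sup>2"
    unfolding cnj_mult_self cinner_self[of x] by (simp del: of_real_power)
  then have "(norm (scaleC c x))\<^sup>2 = (cmod c * norm x)\<^sup>2"
    by (simp add: norm_sq_eq_Re power_mult_distrib)
  then show ?thesis
    by (metis norm_ge_zero power2_eq_imp_eq zero_le_mult_iff)
qed

lemma norm_diff_scaleC_sq:
  "(norm (x - scaleC k y))\<^sup>2 = (norm x)\<^sup>2 - 2 * Re (k * cinner x y) + (cmod k)\<^sup>2 * (norm (y::'a::complex_inner))\<^sup>2"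
proof -
  have e: "cinner (x - scaleC k y) (x - scaleC k y) =
      cinner x x - k * cinner x y - cnj k * cinner y x + cnj k * k * cinner y y"
    by (simp add: cinner_simps algebra_simps)
  have 1: "Re (cnj k * cinner y x) = Re (k * cinner x y)"
    by (metis cinner_commute complex_cnj_mult cnj.sel(1))
  have 2: "Re (cnj k * k * cinner y y) = (cmod k)\<^sup>2 * (norm y)\<^sup>2"
    unfolding cnj_mult_self cinner_self[of y] by (simp del: of_real_power)
  have "(norm (x - scaleC k y))\<^sup>2 = Re (cinner x x) - Re (k * cinner x y) - Re (cnj k * cinner y x) + Re (cnj k * k * cinner y y)"
    unfolding norm_sq_eq_Re e by simp
  then show ?thesis unfolding 1 2 norm_sq_eq_Re[of x] by simp
qed

lemma cauchy_schwarz: "cmod (cinner x y) \<le> norm x * norm (y::'a::complex_inner)"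
proof (cases "x = 0")
  case True then show ?thesis by simp
next
  case False
  define c where "c = cinner x y"
  define k where "k = complex_of_real ((norm x)\<^sup>2)"
  have nx: "norm x > 0" using False by simp
  have "(norm (y - scaleC (c / k) x))\<^sup>2 = (norm y)\<^sup>2 - 2 * Re (c / k * cinner y x) + (cmod (c/k))\<^sup>2 * (norm x)\<^sup>2"
    by (rule norm_diff_scaleC_sq)
  moreover have "cinner y x = cnj c" unfolding c_def by (metis cinner_commute)
  moreover have "c / k * cnj c = complex_of_real ((cmod c)\<^sup>2 / (norm x)\<^sup>2)"
  proof -
    have "c / k * cnj c = (cnj c * c) / k" by simp
    also have "\<dots> = complex_of_real ((cmod c)\<^sup>2) / complex_of_real ((norm x)\<^sup>2)"
      unfolding cnj_mult_self k_def by simp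
    finally show ?thesis by (simp del: of_real_power add: of_real_divide)
  qed
  moreover have "(cmod (c/k))\<^sup>2 * (norm x)\<^sup>2 = (cmod c)\<^sup>2 / (norm x)\<^sup>2"
  proof -
    have ck: "cmod k = (norm x)\<^sup>2" unfolding k_def by (simp del: of_real_power)
    show ?thesis unfolding norm_divide ck using nx by (simp add: power_divide field_simps)
  qed
  ultimately have "(norm (y - scaleC (c / k) x))\<^sup>2 = (norm y)\<^sup>2 - (cmod c)\<^sup>2 / (norm x)\<^sup>2"
    by (simp del: of_real_power)
  then have "0 \<le> (norm y)\<^sup>2 - (cmod c)\<^sup>2 / (norm x)\<^sup>2"
    by (metis zero_le_power2)
  then have "(cmod c)\<^sup>2 \<le> (norm x * norm y)\<^sup>2"
    using nx by (simp add: field_simps power_mult_distrib)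
  then show ?thesis unfolding c_def
    by (meson mult_nonneg_nonneg norm_ge_zero power2_le_imp_le)
qed

instantiation prod :: (complex_vector, complex_vector) complex_vector
begin
definition scaleC_prod_def: "scaleC c x = (scaleC c (fst x), scaleC c (snd x))"
instance
  by standard (auto simp: scaleC_prod_def scaleC_add_right scaleC_add_left scaleC_scaleC
      scaleR_prod_def scaleR_scaleC scaleC_one)
end

lemma scaleC_Pair[simp]: "scaleC c (x, y) = (scaleC c x, scaleC c y)"
  by (simp add: scaleC_prod_def)

instantiation prod :: (complex_inner, complex_inner) complex_inner
begin
definition cinner_prod_def: "cinner x y = cinner (fst x) (fst y) + cinner (snd x) (snd y)"
instance
proof
  fix x y z :: "'a \<times> 'b" and c :: complex
  show "cinner x y = cnj (cinner y x)"
    unfolding cinner_prod_def by (metis cinner_commute complex_cnj_add)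
  show "cinner (x + y) z = cinner x z + cinner y z"
    unfolding cinner_prod_def by (simp add: cinner_add_left)
  show "cinner (scaleC c x) y = cnj c * cinner x y"
    unfolding cinner_prod_def scaleC_prod_def by (simp add: cinner_scaleC_left algebra_simps)
  show "Im (cinner x x) = 0 \<and> 0 \<le> Re (cinner x x)"
    unfolding cinner_prod_def by (simp add: cinner_self)
  show "(cinner x x = 0) = (x = 0)"
  proof -
    obtain p q where x: "x = (p, q)" by fastforce
    have "cinner x x = complex_of_real ((norm p)\<^sup>2 + (norm q)\<^sup>2)"
      unfolding x cinner_prod_def cinner_self by (simp only: fst_conv snd_conv of_real_add)
    then have "(cinner x x = 0) = ((norm p)\<^sup>2 + (norm q)\<^sup>2 = 0)" by (simp only: of_real_eq_0_iff)
    also have "\<dots> = (p = 0 \<and> q = 0)" by (simp add: add_nonneg_eq_0_iff)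
    finally show ?thesis by (simp add: x zero_prod_def)
  qed
  show "norm x = sqrt (Re (cinner x x))"
    unfolding cinner_prod_def by (simp add: Re_cinner_self norm_prod_def)
qed
end

instance prod :: (chilbert_space, chilbert_space) chilbert_space ..

lemma cinner_Pair: "cinner (a, b) (c, d) = cinner a c + cinner b d"
  by (simp add: cinner_prod_def)

lemma bounded_bilinear_cinner: "bounded_bilinear (cinner :: 'a::complex_inner \<Rightarrow> 'a \<Rightarrow> complex)"
proof
  fix a a' b b' :: 'a and r :: real
  show "cinner (a + a') b = cinner a b + cinner a' b" by (rule cinner_add_left)
  show "cinner a (b + b') = cinner a b + cinner a b'" by (rule cinner_add_right)
  show "cinner (r *\<^sub>R a) b = r *\<^sub>R cinner a b"
    by (simp add: scaleR_scaleC cinner_scaleC_left scaleR_conv_of_real)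
  show "cinner a (r *\<^sub>R b) = r *\<^sub>R cinner a b"
    by (simp add: scaleR_scaleC cinner_scaleC_right scaleR_conv_of_real)
  show "\<exists>K. \<forall>a b. norm (cinner a b) \<le> norm a * norm b * K"
    by (rule exI[of _ 1]) (simp add: cauchy_schwarz)
qed

lemmas tendsto_cinner = bounded_bilinear.tendsto[OF bounded_bilinear_cinner]

lemma continuous_on_cinner[continuous_intros]:
  "continuous_on S f \<Longrightarrow> continuous_on S g \<Longrightarrow> continuous_on S (\<lambda>x. cinner (f x) (g x))"
  by (rule bounded_bilinear.continuous_on[OF bounded_bilinear_cinner])

lemma norm_add_sq: "(norm (x + y))\<^sup>2 = (norm x)\<^sup>2 + (norm y)\<^sup>2 + 2 * Re (cinner x (y::'a::complex_inner))"
proof -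
  have "cinner (x+y) (x+y) = cinner x x + cinner y y + cinner x y + cinner y x"
    by (simp add: cinner_simps)
  moreover have "Re (cinner y x) = Re (cinner x y)" by (metis cinner_commute cnj.sel(1))
  ultimately show ?thesis by (simp add: Re_cinner_self[symmetric])
qed

lemma norm_diff_sq: "(norm (x - y))\<^sup>2 = (norm x)\<^sup>2 + (norm y)\<^sup>2 - 2 * Re (cinner x (y::'a::complex_inner))"
  using norm_add_sq[of x "-y"] by (simp add: cinner_minus_right)

lemma parallelogram: "(norm (x + y))\<^sup>2 + (norm (x - y))\<^sup>2 = 2 * (norm x)\<^sup>2 + 2 * (norm (y::'a::complex_inner))\<^sup>2"
  using norm_add_sq[of x y] norm_diff_sq[of x y] by simp

lemma csubspace_0: "csubspace S \<Longrightarrow> 0 \<in> S" by (simp add: csubspace_def)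
lemma csubspace_add: "csubspace S \<Longrightarrow> x \<in> S \<Longrightarrow> y \<in> S \<Longrightarrow> x + y \<in> S" by (simp add: csubspace_def)
lemma csubspace_scaleC: "csubspace S \<Longrightarrow> x \<in> S \<Longrightarrow> scaleC c x \<in> S" by (simp add: csubspace_def)
lemma csubspace_scaleR: "csubspace S \<Longrightarrow> x \<in> S \<Longrightarrow> scaleR r x \<in> S" by (simp add: csubspace_def scaleR_scaleC)
lemma csubspace_minus: "csubspace S \<Longrightarrow> x \<in> S \<Longrightarrow> - x \<in> S"
  by (metis csubspace_scaleC scaleC_minus1)
lemma csubspace_diff: "csubspace S \<Longrightarrow> x \<in> S \<Longrightarrow> y \<in> S \<Longrightarrow> x - y \<in> S"
  using csubspace_add[of S x "-y"] csubspace_minus[of S y] by simp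

lemma projection_exists:
  fixes S :: "'a::chilbert_space set"
  assumes sub: "csubspace S" and cl: "closed S"
  shows "\<exists>w\<in>S. \<forall>z\<in>S. cinner (v - w) z = 0"
proof -
  define N where "N = (\<lambda>s. norm (v - s)) ` S"
  define d where "d = Inf N"
  have ne: "N \<noteq> {}" using csubspace_0[OF sub] unfolding N_def by auto
  have bdd: "bdd_below N" unfolding N_def by (rule bdd_belowI[of _ 0]) auto
  have dle: "\<And>s. s \<in> S \<Longrightarrow> d \<le> norm (v - s)"
    unfolding d_def using bdd by (intro cInf_lower) (auto simp: N_def)
  have d0: "0 \<le> d" unfolding d_def using ne by (intro cInf_greatest) (auto simp: N_def)
  define e where "e = (\<lambda>n::nat. inverse (real (Suc n)))"
  have e0: "\<And>n. 0 < e n" and e1: "\<And>n. e n \<le> 1" unfolding e_def by (auto simp: field_simps)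
  have "\<forall>n. \<exists>s\<in>S. norm (v - s) < d + e n"
  proof
    fix n
    have "Inf N < d + e n" using e0[of n] unfolding d_def by simp
    from cInf_lessD[OF ne this] show "\<exists>s\<in>S. norm (v - s) < d + e n" unfolding N_def by auto
  qed
  then obtain s where sS: "\<And>n. s n \<in> S" and sl: "\<And>n. norm (v - s n) < d + e n" by metis
  define c where "c = 2 * d + 1"
  have c0: "0 < c" using d0 unfolding c_def by simp
  have sq: "(norm (v - s n))\<^sup>2 \<le> d\<^sup>2 + c * e n" for n
  proof -
    have "(norm (v - s n))\<^sup>2 \<le> (d + e n)\<^sup>2"
      using sl[of n] by (intro power_mono) auto
    also have "\<dots> = d\<^sup>2 + 2 * d * e n + e n * e n" by (simp add: power2_eq_square algebra_simps)
    also have "\<dots> \<le> d\<^sup>2 + 2 * d * e n + e n"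
      using e0[of n] e1[of n] by (simp add: mult_le_cancel_left1)
    finally show ?thesis unfolding c_def by (simp add: algebra_simps)
  qed
  have est: "(norm (s n - s k))\<^sup>2 \<le> 2 * c * (e n + e k)" for n k
  proof -
    define mid where "mid = scaleR (1/2) (s n + s k)"
    have midS: "mid \<in> S" unfolding mid_def using sS sub by (simp add: csubspace_add csubspace_scaleR)
    have eq: "(v - s n) + (v - s k) = scaleR 2 (v - mid)"
      unfolding mid_def by (simp add: algebra_simps scaleR_2)
    have "2 * d \<le> norm ((v - s n) + (v - s k))"
      unfolding eq using dle[OF midS] by simp
    then have "(2 * d)\<^sup>2 \<le> (norm ((v - s n) + (v - s k)))\<^sup>2"
      using d0 by (intro power_mono) auto
    then have "4 * d\<^sup>2 \<le> (norm ((v - s n) + (v - s k)))\<^sup>2"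
      by (simp add: power_mult_distrib)
    moreover have "(norm ((v - s n) + (v - s k)))\<^sup>2 + (norm ((v - s n) - (v - s k)))\<^sup>2
        = 2 * (norm (v - s n))\<^sup>2 + 2 * (norm (v - s k))\<^sup>2" by (rule parallelogram)
    moreover have "(v - s n) - (v - s k) = s k - s n" by simp
    moreover have "norm (s k - s n) = norm (s n - s k)" by (rule norm_minus_commute)
    ultimately show ?thesis using sq[of n] sq[of k] by (simp add: algebra_simps)
  qed
  have "Cauchy s"
  proof (rule CauchyI)
    fix r :: real assume r: "0 < r"
    have "0 < r\<^sup>2 / (4 * c)" using r c0 by simp
    from reals_Archimedean[OF this] obtain M where M: "e M < r\<^sup>2 / (4 * c)" unfolding e_def by auto
    have "\<forall>m\<ge>M. \<forall>n\<ge>M. norm (s m - s n) < r"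
    proof (intro allI impI)
      fix m n assume mn: "M \<le> m" "M \<le> n"
      have em: "e m \<le> e M" "e n \<le> e M" using mn unfolding e_def by (auto simp: field_simps)
      have "(norm (s m - s n))\<^sup>2 \<le> 2 * c * (e m + e n)" by (rule est)
      also have "\<dots> \<le> 2 * c * (2 * e M)" using em c0 by (intro mult_left_mono) auto
      also have "\<dots> < r\<^sup>2" using M c0 by (simp add: field_simps)
      finally have "(norm (s m - s n))\<^sup>2 < r\<^sup>2" .
      then show "norm (s m - s n) < r" by (rule power2_less_imp_less[OF _ less_imp_le[OF r]])
    qed
    then show "\<exists>M. \<forall>m\<ge>M. \<forall>n\<ge>M. norm (s m - s n) < r" by blast
  qed
  then obtain w where sw: "s \<longlonglongrightarrow> w" using Cauchy_convergent convergent_def by blast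
  have wS: "w \<in> S" by (rule closed_sequentially[OF cl sS sw])
  have "norm (v - w) \<le> d"
  proof (rule LIMSEQ_le)
    show "(\<lambda>n. norm (v - s n)) \<longlonglongrightarrow> norm (v - w)" by (intro tendsto_intros sw)
    show "(\<lambda>n. d + e n) \<longlonglongrightarrow> d" unfolding e_def using LIMSEQ_inverse_real_of_nat
      by (metis add.right_neutral tendsto_add_const_iff)
    show "\<exists>N. \<forall>n\<ge>N. norm (v - s n) \<le> d + e n" using sl less_imp_le by blast
  qed
  then have minw: "\<And>t. t \<in> S \<Longrightarrow> norm (v - w) \<le> norm (v - t)" using dle by force
  have "\<forall>z\<in>S. cinner (v - w) z = 0"
  proof
    fix z assume zS: "z \<in> S"
    define c0 where "c0 = cinner (v - w) z"
    define C where "C = (cmod c0)\<^sup>2"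
    define \<epsilon> where "\<epsilon> = 1 / ((norm z)\<^sup>2 + 1)"
    have pz: "0 < (norm z)\<^sup>2 + 1" using zero_le_power2[of "norm z"] by linarith
    have eps: "0 < \<epsilon>" "\<epsilon> * (norm z)\<^sup>2 \<le> 1" unfolding \<epsilon>_def using pz by (auto simp: field_simps)
    define k where "k = complex_of_real \<epsilon> * cnj c0"
    have "w + scaleC k z \<in> S" using wS zS sub by (simp add: csubspace_add csubspace_scaleC)
    from minw[OF this] have "(norm (v - w))\<^sup>2 \<le> (norm ((v - w) - scaleC k z))\<^sup>2"
      by (simp add: algebra_simps power_mono)
    also have "\<dots> = (norm (v - w))\<^sup>2 - 2 * Re (k * c0) + (cmod k)\<^sup>2 * (norm z)\<^sup>2"
      unfolding c0_def by (rule norm_diff_scaleC_sq)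
    also have "Re (k * c0) = \<epsilon> * C"
    proof -
      have "k * c0 = complex_of_real \<epsilon> * (cnj c0 * c0)" unfolding k_def by (simp add: mult.assoc)
      also have "\<dots> = complex_of_real (\<epsilon> * C)" unfolding cnj_mult_self C_def by simp
      finally show ?thesis by simp
    qed
    also have "(cmod k)\<^sup>2 = \<epsilon>\<^sup>2 * C" unfolding k_def C_def using eps
      by (simp add: norm_mult power_mult_distrib)
    finally have "2 * \<epsilon> * C \<le> \<epsilon> * ((\<epsilon> * (norm z)\<^sup>2) * C)" by (simp add: power2_eq_square algebra_simps)
    then have "2 * C \<le> (\<epsilon> * (norm z)\<^sup>2) * C" using eps by (simp add: mult.assoc)
    also have "\<dots> \<le> 1 * C" using eps unfolding C_def by (intro mult_right_mono) auto
    finally have "C \<le> 0" by simp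
    then show "cinner (v - w) z = 0" unfolding C_def c0_def by simp
  qed
  with wS show ?thesis by blast
qed

lemma subspace_UNIV_if_orth:
  fixes S :: "'a::chilbert_space set"
  assumes sub: "csubspace S" and cl: "closed S" and orth: "\<And>y. (\<forall>z\<in>S. cinner y z = 0) \<Longrightarrow> y = 0"
  shows "S = UNIV"
proof -
  have "v \<in> S" for v
  proof -
    obtain w where "w \<in> S" "\<forall>z\<in>S. cinner (v - w) z = 0" using projection_exists[OF sub cl] by blast
    with orth[of "v - w"] show ?thesis by simp
  qed
  then show ?thesis by blast
qed

lemma riesz_subspace:
  fixes S :: "'a::chilbert_space set" and l :: "'a \<Rightarrow> complex"
  assumes sub: "csubspace S" and cl: "closed S"
    and ladd: "\<And>x y. x \<in> S \<Longrightarrow> y \<in> S \<Longrightarrow> l (x + y) = l x + l y"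
    and lsc: "\<And>c x. x \<in> S \<Longrightarrow> l (scaleC c x) = c * l x"
    and lb: "\<And>x. x \<in> S \<Longrightarrow> cmod (l x) \<le> K * norm x"
  shows "\<exists>F\<in>S. \<forall>u\<in>S. l u = cinner F u"
proof (cases "\<forall>x\<in>S. l x = 0")
  case True then show ?thesis using csubspace_0[OF sub] by (intro bexI[of _ 0]) auto
next
  case False
  then obtain x0 where x0: "x0 \<in> S" "l x0 \<noteq> 0" by auto
  have l0: "l 0 = 0" using lsc[OF x0(1), of 0] by simp
  have ldiff: "l (x - y) = l x - l y" if "x \<in> S" "y \<in> S" for x y
  proof -
    have "l ((x - y) + y) = l (x - y) + l y" by (rule ladd) (use that csubspace_diff[OF sub] in auto)
    then show ?thesis by simp
  qed
  define Ker where "Ker = {x\<in>S. l x = 0}"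
  have subK: "csubspace Ker"
    unfolding csubspace_def Ker_def using sub l0 ladd lsc by (auto simp: csubspace_def)
  have clK: "closed Ker"
    unfolding closed_sequential_limits
  proof (intro allI impI, elim conjE)
    fix f y assume fK: "\<forall>n. f n \<in> Ker" and fy: "f \<longlonglongrightarrow> y"
    have yS: "y \<in> S" using closed_sequentially[OF cl _ fy] fK unfolding Ker_def by auto
    have "cmod (l y) \<le> 0"
    proof (rule LIMSEQ_le_const)
      have "(\<lambda>n. K * norm (f n - y)) \<longlonglongrightarrow> K * norm (y - y)" by (intro tendsto_intros fy)
      then show "(\<lambda>n. K * norm (f n - y)) \<longlonglongrightarrow> 0" by simp
      have "cmod (l y) \<le> K * norm (f n - y)" for n
      proof -
        have "l (y - f n) = l y" using ldiff[OF yS, of "f n"] fK unfolding Ker_def by auto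
        then show ?thesis using lb[of "y - f n"] csubspace_diff[OF sub yS, of "f n"] fK
          unfolding Ker_def by (auto simp: norm_minus_commute)
      qed
      then show "\<exists>N. \<forall>n\<ge>N. cmod (l y) \<le> K * norm (f n - y)" by blast
    qed
    then show "y \<in> Ker" using yS unfolding Ker_def by simp
  qed
  obtain w where wK: "w \<in> Ker" and wo: "\<forall>z\<in>Ker. cinner (x0 - w) z = 0"
    using projection_exists[OF subK clK] by blast
  define z1 where "z1 = x0 - w"
  have wS: "w \<in> S" using wK unfolding Ker_def by auto
  have z1S: "z1 \<in> S" unfolding z1_def using csubspace_diff[OF sub x0(1) wS] .
  have lz1: "l z1 = l x0" unfolding z1_def using ldiff[OF x0(1) wS] wK unfolding Ker_def by auto
  have z10: "z1 \<noteq> 0" using lz1 x0 l0 by auto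
  define nn where "nn = cinner z1 z1"
  have nn0: "nn \<noteq> 0" unfolding nn_def using z10 cinner_eq_zero_iff by auto
  define F where "F = scaleC (cnj (l z1 / nn)) z1"
  have FS: "F \<in> S" unfolding F_def using z1S sub by (simp add: csubspace_scaleC)
  have "l u = cinner F u" if uS: "u \<in> S" for u
  proof -
    define u' where "u' = u - scaleC (l u / l z1) z1"
    have u'S: "u' \<in> S" unfolding u'_def using uS z1S sub by (simp add: csubspace_diff csubspace_scaleC)
    have "l u' = l u - (l u / l z1) * l z1"
      unfolding u'_def using ldiff[OF uS, of "scaleC (l u / l z1) z1"] lsc[OF z1S] z1S sub
      by (simp add: csubspace_scaleC)
    also have "\<dots> = 0" using lz1 x0 by simp
    finally have "u' \<in> Ker" using u'S unfolding Ker_def by simp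
    then have "cinner z1 u' = 0" using wo unfolding z1_def by blast
    then have "cinner z1 u = (l u / l z1) * nn"
      unfolding u'_def nn_def by (simp add: cinner_simps)
    then show ?thesis unfolding F_def using nn0 lz1 x0
      by (simp add: cinner_scaleC_left)
  qed
  with FS show ?thesis by blast
qed

lemma lax_milgram:
  fixes S :: "'a::chilbert_space set" and M :: "'a \<Rightarrow> 'a"
  assumes sub: "csubspace S" and cl: "closed S"
    and Madd: "\<And>x y. M (x + y) = M x + M y" and Msc: "\<And>c x. M (scaleC c x) = scaleC c (M x)"
    and Mb: "\<And>x. norm (M x) \<le> K * norm x"
    and mu: "0 < \<mu>" and co: "\<And>x. x \<in> S \<Longrightarrow> \<mu> * (norm x)\<^sup>2 \<le> Re (cinner (M x) x)"
  shows "\<exists>X\<in>S. \<forall>V\<in>S. cinner (M X - Y) V = 0"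
proof -
  have M0: "M 0 = 0" using Msc[of 0 0] by simp
  have Mdiff: "M (x - y) = M x - M y" for x y
    using Madd[of "x - y" y] by simp
  define Q where "Q = {Y. \<exists>X\<in>S. \<forall>V\<in>S. cinner (M X - Y) V = 0}"
  have subQ: "csubspace Q"
    unfolding csubspace_def
  proof (intro conjI ballI allI)
    show "0 \<in> Q" unfolding Q_def using csubspace_0[OF sub] M0 by force
  next
    fix Y1 Y2 assume "Y1 \<in> Q" "Y2 \<in> Q"
    then obtain X1 X2 where X: "X1 \<in> S" "X2 \<in> S" "\<forall>V\<in>S. cinner (M X1 - Y1) V = 0"
      "\<forall>V\<in>S. cinner (M X2 - Y2) V = 0" unfolding Q_def by blast
    have eq: "M (X1 + X2) - (Y1 + Y2) = (M X1 - Y1) + (M X2 - Y2)" by (simp add: Madd)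
    have "\<forall>V\<in>S. cinner (M (X1 + X2) - (Y1 + Y2)) V = 0"
      unfolding eq cinner_add_left using X by simp
    then show "Y1 + Y2 \<in> Q" unfolding Q_def using X csubspace_add[OF sub] by blast
  next
    fix c Y1 assume "Y1 \<in> Q"
    then obtain X1 where X: "X1 \<in> S" "\<forall>V\<in>S. cinner (M X1 - Y1) V = 0" unfolding Q_def by blast
    have "M (scaleC c X1) - scaleC c Y1 = scaleC c (M X1 - Y1)" by (simp add: Msc scaleC_diff_right)
    then have "\<forall>V\<in>S. cinner (M (scaleC c X1) - scaleC c Y1) V = 0" using X by (simp add: cinner_scaleC_left)
    then show "scaleC c Y1 \<in> Q" unfolding Q_def using X csubspace_scaleC[OF sub] by blast
  qed
  have clQ: "closed Q"
    unfolding closed_sequential_limits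
  proof (intro allI impI, elim conjE)
    fix Ys Y assume YQ: "\<forall>n. Ys n \<in> Q" and Yl: "Ys \<longlonglongrightarrow> Y"
    have "\<forall>n. \<exists>X. X \<in> S \<and> (\<forall>V\<in>S. cinner (M X - Ys n) V = 0)" using YQ unfolding Q_def by blast
    from choice[OF this] obtain Xs where Xs: "\<forall>n. Xs n \<in> S \<and> (\<forall>V\<in>S. cinner (M (Xs n) - Ys n) V = 0)"
      by blast
    then have XS: "\<And>n. Xs n \<in> S" and Xo: "\<And>n. \<forall>V\<in>S. cinner (M (Xs n) - Ys n) V = 0" by auto
    have est: "\<mu> * norm (Xs n - Xs k) \<le> norm (Ys n - Ys k)" for n k
    proof -
      define E where "E = Xs n - Xs k"
      have ES: "E \<in> S" unfolding E_def using XS csubspace_diff[OF sub] by blast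
      have "cinner (M (Xs n) - Ys n) E - cinner (M (Xs k) - Ys k) E = 0" using Xo ES by simp
      then have "cinner ((M (Xs n) - Ys n) - (M (Xs k) - Ys k)) E = 0" by (simp only: cinner_diff_left)
      moreover have "(M (Xs n) - Ys n) - (M (Xs k) - Ys k) = M E - (Ys n - Ys k)"
        unfolding E_def Mdiff by simp
      ultimately have "cinner (M E - (Ys n - Ys k)) E = 0" by simp
      then have "cinner (M E) E = cinner (Ys n - Ys k) E" by (simp only: cinner_diff_left) simp
      then have "\<mu> * (norm E)\<^sup>2 \<le> Re (cinner (Ys n - Ys k) E)" using co[OF ES] by simp
      also have "\<dots> \<le> cmod (cinner (Ys n - Ys k) E)" by (rule complex_Re_le_cmod)
      also have "\<dots> \<le> norm (Ys n - Ys k) * norm E" by (rule cauchy_schwarz)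
      finally have "\<mu> * norm E * norm E \<le> norm (Ys n - Ys k) * norm E"
        by (simp add: power2_eq_square mult.assoc)
      have "\<mu> * norm E \<le> norm (Ys n - Ys k)"
      proof (cases "norm E = 0")
        case True then show ?thesis by simp
      next
        case False
        then have "0 < norm E" by simp
        from mult_right_le_imp_le[OF \<open>\<mu> * norm E * norm E \<le> norm (Ys n - Ys k) * norm E\<close> this]
        show ?thesis .
      qed
      then show ?thesis unfolding E_def .
    qed
    have "Cauchy Xs"
    proof (rule CauchyI)
      fix r :: real assume r: "0 < r"
      from CauchyD[OF LIMSEQ_imp_Cauchy[OF Yl], of "\<mu> * r"] r mu
      obtain N where N: "\<forall>m\<ge>N. \<forall>n\<ge>N. norm (Ys m - Ys n) < \<mu> * r" by auto
      have "\<forall>m\<ge>N. \<forall>n\<ge>N. norm (Xs m - Xs n) < r"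
      proof (intro allI impI)
        fix m n assume "N \<le> m" "N \<le> n"
        then have "norm (Ys m - Ys n) < \<mu> * r" using N by blast
        then have "\<mu> * norm (Xs m - Xs n) < \<mu> * r" using est[of m n] by linarith
        then show "norm (Xs m - Xs n) < r" using mu by simp
      qed
      then show "\<exists>M. \<forall>m\<ge>M. \<forall>n\<ge>M. norm (Xs m - Xs n) < r" by blast
    qed
    then obtain X where Xl: "Xs \<longlonglongrightarrow> X" using Cauchy_convergent convergent_def by blast
    have XS': "X \<in> S" by (rule closed_sequentially[OF cl XS Xl])
    have MXl: "(\<lambda>n. M (Xs n)) \<longlonglongrightarrow> M X"
    proof (rule LIM_zero_cancel, rule Lim_null_comparison)
      have "norm (M (Xs n) - M X) \<le> K * norm (Xs n - X)" for n
        using Mb[of "Xs n - X"] unfolding Mdiff .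
      then show "\<forall>\<^sub>F n in sequentially. norm (M (Xs n) - M X) \<le> K * norm (Xs n - X)" by simp
      have "(\<lambda>n. K * norm (Xs n - X)) \<longlonglongrightarrow> K * norm (X - X)" by (intro tendsto_intros Xl)
      then show "(\<lambda>n. K * norm (Xs n - X)) \<longlonglongrightarrow> 0" by simp
    qed
    have "\<forall>V\<in>S. cinner (M X - Y) V = 0"
    proof
      fix V assume VS: "V \<in> S"
      have "(\<lambda>n. cinner (M (Xs n) - Ys n) V) \<longlonglongrightarrow> cinner (M X - Y) V"
        by (intro tendsto_cinner tendsto_diff MXl Yl tendsto_const)
      moreover have "(\<lambda>n. cinner (M (Xs n) - Ys n) V) = (\<lambda>n. 0)" using Xo VS by auto
      ultimately have "(\<lambda>n. 0::complex) \<longlonglongrightarrow> cinner (M X - Y) V" by simp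
      from LIMSEQ_unique[OF tendsto_const this] show "cinner (M X - Y) V = 0" by simp
    qed
    then show "Y \<in> Q" unfolding Q_def by (intro CollectI bexI[of _ X] XS')
  qed
  have orth: "y = 0" if yo: "\<forall>z\<in>Q. cinner y z = 0" for y
  proof -
    obtain w where wS: "w \<in> S" and wo: "\<forall>z\<in>S. cinner (y - w) z = 0"
      using projection_exists[OF sub cl] by blast
    have "\<forall>V\<in>S. cinner (M 0 - (y - w)) V = 0"
    proof
      fix V assume "V \<in> S"
      then have "cinner (y - w) V = 0" using wo by blast
      then show "cinner (M 0 - (y - w)) V = 0" unfolding M0 diff_0 cinner_minus_left by simp
    qed
    then have "y - w \<in> Q" unfolding Q_def by (intro CollectI bexI[of _ 0] csubspace_0[OF sub])
    then have 1: "cinner y (y - w) = 0" using yo by blast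
    have "cinner (y - w) w = 0" using wo wS by blast
    then have 2: "cinner w (y - w) = 0" using cinner_commute[of w "y - w"] by simp
    have "cinner (y - w) (y - w) = 0" using 1 2 by (simp add: cinner_diff_left)
    then have "y - w = 0" by (simp only: cinner_eq_zero_iff)
    then have yw: "y = w" by simp
    have "\<forall>V\<in>S. cinner (M w - M w) V = 0" by simp
    then have "M w \<in> Q" unfolding Q_def by (intro CollectI bexI[of _ w] wS)
    then have "cinner y (M w) = 0" using yo by blast
    then have "cinner w (M w) = 0" using yw by simp
    then have "cinner (M w) w = 0" using cinner_commute[of "M w" w] by simp
    then have "\<mu> * (norm w)\<^sup>2 \<le> 0" using co[OF wS] by simp
    then have "(norm w)\<^sup>2 \<le> 0" using mu by (simp add: mult_le_0_iff)
    then have "norm w = 0" by simp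
    then show ?thesis using yw by simp
  qed
  have "Q = UNIV" by (rule subspace_UNIV_if_orth[OF subQ clQ orth])
  then show ?thesis unfolding Q_def by blast
qed

declare cinner_eq_zero_iff[simp]

lemma closed_cinner_eq:
  "closed {p. cinner (f p) c = (g p :: complex)}" if "continuous_on UNIV f" "continuous_on UNIV g"
  for c :: "'a::complex_inner"
  by (rule closed_Collect_eq) (auto intro!: continuous_intros that)

lemma dense_orth_zero:
  fixes Sd :: "'a::complex_inner set"
  assumes dense: "closure Sd = UNIV" and o: "\<And>x. x \<in> Sd \<Longrightarrow> cinner x z = 0"
  shows "z = 0"
proof -
  have cl: "closed {x. cinner x z = 0}"
    by (rule closed_Collect_eq) (auto intro!: continuous_intros)
  have "Sd \<subseteq> {x. cinner x z = 0}" using o by auto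
  then have "closure Sd \<subseteq> {x. cinner x z = 0}" using closure_minimal cl by blast
  then have "z \<in> {x. cinner x z = 0}" using dense by blast
  then show ?thesis by simp
qed

lemma adj_unique:
  fixes f :: "'a::complex_inner \<Rightarrow> 'b::complex_inner"
  assumes dense: "closure Sd = UNIV"
    and 1: "\<forall>x\<in>Sd. cinner (f x) y = cinner x z1" and 2: "\<forall>x\<in>Sd. cinner (f x) y = cinner x z2"
  shows "z1 = z2"
proof -
  have "z1 - z2 = 0"
    by (rule dense_orth_zero[OF dense]) (use 1 2 in \<open>simp add: cinner_diff_right\<close>)
  then show ?thesis by simp
qed

lemma adj_eq:
  fixes f :: "'a::complex_inner \<Rightarrow> 'b::complex_inner"
  assumes dense: "closure Sd = UNIV" and h: "\<forall>x\<in>Sd. cinner (f x) y = cinner x z"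
  shows "y \<in> adj_dom Sd f" "adj Sd f y = z"
proof -
  show "y \<in> adj_dom Sd f" unfolding adj_dom_def using h by blast
  show "adj Sd f y = z" unfolding adj_def
    by (rule the_equality) (use h adj_unique[OF dense] in blast)+
qed

lemma adj_prop:
  fixes f :: "'a::complex_inner \<Rightarrow> 'b::complex_inner"
  assumes dense: "closure Sd = UNIV" and y: "y \<in> adj_dom Sd f" and x: "x \<in> Sd"
  shows "cinner (f x) y = cinner x (adj Sd f y)"
proof -
  obtain z where h: "\<forall>x\<in>Sd. cinner (f x) y = cinner x z" using y unfolding adj_dom_def by blast
  show ?thesis using adj_eq(2)[OF dense h] h x by simp
qed

lemma adj_add:
  fixes f :: "'a::complex_inner \<Rightarrow> 'b::complex_inner"
  assumes dense: "closure Sd = UNIV" and y: "y1 \<in> adj_dom Sd f" "y2 \<in> adj_dom Sd f"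
  shows "y1 + y2 \<in> adj_dom Sd f" "adj Sd f (y1 + y2) = adj Sd f y1 + adj Sd f y2"
proof -
  have h: "\<forall>x\<in>Sd. cinner (f x) (y1 + y2) = cinner x (adj Sd f y1 + adj Sd f y2)"
    using adj_prop[OF dense y(1)] adj_prop[OF dense y(2)] by (simp add: cinner_add_right)
  show "y1 + y2 \<in> adj_dom Sd f" "adj Sd f (y1 + y2) = adj Sd f y1 + adj Sd f y2"
    using adj_eq[OF dense h] by auto
qed

lemma adj_scaleC:
  fixes f :: "'a::complex_inner \<Rightarrow> 'b::complex_inner"
  assumes dense: "closure Sd = UNIV" and y: "y \<in> adj_dom Sd f"
  shows "scaleC c y \<in> adj_dom Sd f" "adj Sd f (scaleC c y) = scaleC c (adj Sd f y)"
proof -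
  have h: "\<forall>x\<in>Sd. cinner (f x) (scaleC c y) = cinner x (scaleC c (adj Sd f y))"
    using adj_prop[OF dense y] by (simp add: cinner_scaleC_right)
  show "scaleC c y \<in> adj_dom Sd f" "adj Sd f (scaleC c y) = scaleC c (adj Sd f y)"
    using adj_eq[OF dense h] by auto
qed

lemma adj_zero:
  fixes f :: "'a::complex_inner \<Rightarrow> 'b::complex_inner"
  assumes dense: "closure Sd = UNIV"
  shows "0 \<in> adj_dom Sd f" "adj Sd f 0 = 0"
  using adj_eq[OF dense, of f 0 0] by auto

lemma adj_dom_subspace:
  fixes f :: "'a::complex_inner \<Rightarrow> 'b::complex_inner"
  assumes dense: "closure Sd = UNIV"
  shows "csubspace (adj_dom Sd f)"
  unfolding csubspace_def using adj_zero[OF dense] adj_add[OF dense] adj_scaleC[OF dense] by blast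

lemma adj_diff:
  fixes f :: "'a::complex_inner \<Rightarrow> 'b::complex_inner"
  assumes dense: "closure Sd = UNIV" and y: "y1 \<in> adj_dom Sd f" "y2 \<in> adj_dom Sd f"
  shows "adj Sd f (y1 - y2) = adj Sd f y1 - adj Sd f y2"
proof -
  have h: "\<forall>x\<in>Sd. cinner (f x) (y1 - y2) = cinner x (adj Sd f y1 - adj Sd f y2)"
    using adj_prop[OF dense y(1)] adj_prop[OF dense y(2)] by (simp add: cinner_diff_right)
  show ?thesis using adj_eq[OF dense h] by auto
qed

lemma neg_adj_graph:
  fixes f :: "'a::complex_inner \<Rightarrow> 'b::complex_inner"
  assumes dense: "closure Sd = UNIV"
  shows "{(y, - adj Sd f y) | y. y \<in> adj_dom Sd f} = (\<Inter>x\<in>Sd. {p. cinner (f x) (fst p) = - cinner x (snd p)})"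
    (is "?A = ?B")
proof
  show "?A \<subseteq> ?B" using adj_prop[OF dense] by (auto simp: cinner_minus_right)
  show "?B \<subseteq> ?A"
  proof
    fix p assume "p \<in> ?B"
    then have h: "\<forall>x\<in>Sd. cinner (f x) (fst p) = cinner x (- snd p)" by (auto simp: cinner_minus_right)
    then show "p \<in> ?A" using adj_eq[OF dense h] by (intro CollectI exI[of _ "fst p"]) auto
  qed
qed

lemma closed_neg_adj_graph:
  fixes f :: "'a::complex_inner \<Rightarrow> 'b::complex_inner"
  assumes dense: "closure Sd = UNIV"
  shows "closed {(y, - adj Sd f y) | y. y \<in> adj_dom Sd f}"
  unfolding neg_adj_graph[OF dense]
  by (intro closed_INT ballI closed_Collect_eq) (auto intro!: continuous_intros)

lemma graph_subspace:
  assumes "clinear_on Sd T"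
  shows "csubspace {(x, T x) | x. x \<in> Sd}"
proof -
  have T0: "T 0 = 0" using assms unfolding clinear_on_def csubspace_def
    by (metis scaleC_zero_left)
  show ?thesis
    using assms T0 unfolding clinear_on_def csubspace_def zero_prod_def by (auto intro!: exI)
qed

lemma double_adj:
  fixes T :: "'a::chilbert_space \<Rightarrow> 'b::chilbert_space"
  assumes T: "densely_defined_closed Sd T"
    and h: "\<forall>y\<in>adj_dom Sd T. cinner (adj Sd T y) x = cinner y w"
  shows "x \<in> Sd \<and> T x = w"
proof -
  have lin: "clinear_on Sd T" and dense: "closure Sd = UNIV" and cl: "closed {(x, T x) | x. x \<in> Sd}"
    using T unfolding densely_defined_closed_def by auto
  have sub: "csubspace Sd" using lin unfolding clinear_on_def by auto
  have Tdiff: "T (u - v) = T u - T v" if "u \<in> Sd" "v \<in> Sd" for u v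
  proof -
    have "T ((u - v) + v) = T (u - v) + T v"
      using lin that csubspace_diff[OF sub] unfolding clinear_on_def by blast
    then show ?thesis by simp
  qed
  obtain P where P: "P \<in> {(x, T x) | x. x \<in> Sd}"
    and Po: "\<forall>z\<in>{(x, T x) | x. x \<in> Sd}. cinner ((x, w) - P) z = 0"
    using projection_exists[OF graph_subspace[OF lin] cl] by blast
  then obtain x' where x': "x' \<in> Sd" "P = (x', T x')" by blast
  define p where "p = x - x'"
  define r where "r = w - T x'"
  have o: "cinner p u + cinner r (T u) = 0" if "u \<in> Sd" for u
    using Po that unfolding x' p_def r_def by (auto simp: cinner_Pair)
  have "\<forall>u\<in>Sd. cinner (T u) r = cinner u (- p)"
  proof
    fix u assume u: "u \<in> Sd"
    have e: "cinner r (T u) = - cinner p u" using o[OF u] by (simp add: eq_neg_iff_add_eq_0 add.commute)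
    have "cinner (T u) r = cnj (cinner r (T u))" by (rule cinner_commute)
    also have "\<dots> = - cnj (cinner p u)" unfolding e by simp
    also have "\<dots> = cinner u (- p)" by (simp add: cinner_minus_right cinner_commute[of u p])
    finally show "cinner (T u) r = cinner u (- p)" .
  qed
  from adj_eq[OF dense this] have rA: "r \<in> adj_dom Sd T" "adj Sd T r = - p" by auto
  have "cinner (adj Sd T r) x = cinner r w" using h rA(1) by blast
  then have 1: "- cinner p x = cinner r w" unfolding rA(2) cinner_minus_left .
  have 2: "cinner p x' + cinner r (T x') = 0" using o[OF x'(1)] .
  have "cinner (p, r) (p, r) = cinner p x - cinner p x' + (cinner r w - cinner r (T x'))"
    unfolding cinner_Pair p_def[symmetric] r_def[symmetric] by (simp add: p_def r_def cinner_simps)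
  also have "\<dots> = (cinner p x + cinner r w) - (cinner p x' + cinner r (T x'))" by (simp add: algebra_simps)
  also have "\<dots> = 0" using 1[symmetric] 2 by simp
  finally have "(p, r) = 0" by simp
  then show ?thesis using x' unfolding p_def r_def by (auto simp: zero_prod_def)
qed

lemma clinear_on_sub: "clinear_on S f \<Longrightarrow> csubspace S"
  by (simp add: clinear_on_def)
lemma clinear_on_add: "clinear_on S f \<Longrightarrow> x \<in> S \<Longrightarrow> y \<in> S \<Longrightarrow> f (x + y) = f x + f y"
  by (simp add: clinear_on_def)
lemma clinear_on_scaleC: "clinear_on S f \<Longrightarrow> x \<in> S \<Longrightarrow> f (scaleC c x) = scaleC c (f x)"
  by (simp add: clinear_on_def)
lemma clinear_on_zero: "clinear_on S f \<Longrightarrow> f 0 = 0"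
  using clinear_on_scaleC[of S f 0 0] csubspace_0[OF clinear_on_sub] by auto
lemma clinear_on_diff: "clinear_on S f \<Longrightarrow> x \<in> S \<Longrightarrow> y \<in> S \<Longrightarrow> f (x - y) = f x - f y"
proof -
  assume f: "clinear_on S f" and x: "x \<in> S" and y: "y \<in> S"
  have "x - y \<in> S" using csubspace_diff[OF clinear_on_sub[OF f] x y] .
  then have "f ((x - y) + y) = f (x - y) + f y" using clinear_on_add[OF f _ y] by blast
  then show ?thesis by simp
qed
lemma clinear_on_minus: "clinear_on S f \<Longrightarrow> x \<in> S \<Longrightarrow> f (- x) = - f x"
  using clinear_on_diff[of S f 0 x] csubspace_0[OF clinear_on_sub] clinear_on_zero by fastforce
lemma clinear_on_mono: "clinear_on T f \<Longrightarrow> S \<subseteq> T \<Longrightarrow> csubspace S \<Longrightarrow> clinear_on S f"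
  unfolding clinear_on_def by blast

lemma norm_Pair_sq: "(norm (x, y))\<^sup>2 = (norm x)\<^sup>2 + (norm y)\<^sup>2"
  by (simp add: norm_prod_def)

lemma ginner_Pair: "ginner f x y = cinner (x, f x) (y, f y)"
  by (simp add: ginner_def cinner_Pair)
lemma gnorm_Pair: "gnorm f x = norm (x, f x)"
  by (simp add: gnorm_def norm_prod_def)
lemma ginner_commute: "ginner f x y = cnj (ginner f y x)"
  unfolding ginner_Pair by (rule cinner_commute)

lemma coercive_ex: "coercive M \<Longrightarrow> \<exists>\<mu>>0. \<forall>x. \<mu> * (norm x)\<^sup>2 \<le> Re (cinner (M x) x)"
  by (simp add: coercive_def)

lemma coercive_Re_nonneg: "coercive M \<Longrightarrow> 0 \<le> Re (cinner (M x) x)"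
proof -
  assume "coercive M"
  then obtain \<mu> where "\<mu> > 0" "\<forall>x. \<mu> * (norm x)\<^sup>2 \<le> Re (cinner (M x) x)" by (auto simp: coercive_def)
  then show ?thesis by (meson order_trans zero_le_mult_iff zero_le_power2 less_imp_le)
qed

lemma coercive_zero: "coercive M \<Longrightarrow> Re (cinner (M x) x) \<le> 0 \<Longrightarrow> x = 0"
proof -
  assume "coercive M" and le: "Re (cinner (M x) x) \<le> 0"
  then obtain \<mu> where mu: "\<mu> > 0" "\<forall>x. \<mu> * (norm x)\<^sup>2 \<le> Re (cinner (M x) x)" by (auto simp: coercive_def)
  then have "\<mu> * (norm x)\<^sup>2 \<le> 0" using le by (meson order_trans)
  then have "(norm x)\<^sup>2 \<le> 0" using mu(1) by (simp add: mult_le_0_iff)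
  then show ?thesis by simp
qed

lemma bounded_clinear_op_bound: "bounded_clinear_op f \<Longrightarrow> \<exists>K\<ge>0. \<forall>x. norm (f x) \<le> K * norm x"
proof -
  assume "bounded_clinear_op f"
  then obtain K where K: "\<forall>x. norm (f x) \<le> K * norm x" by (auto simp: bounded_clinear_op_def)
  have "norm (f x) \<le> max K 0 * norm x" for x
    using K[rule_format, of x] by (meson max.cobounded1 mult_right_mono norm_ge_zero order_trans)
  then show ?thesis by (intro exI[of _ "max K 0"]) auto
qed

lemma decomp:
  fixes T :: "'a::chilbert_space \<Rightarrow> 'b::chilbert_space"
  assumes lin: "clinear_on Sd T" and S'Sd: "S' \<subseteq> Sd"
    and sub: "csubspace {(v, T v) | v. v \<in> S'}" and cl: "closed {(v, T v) | v. v \<in> S'}"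
    and u: "u \<in> Sd"
  shows "\<exists>w\<in>S'. \<forall>v\<in>S'. ginner T (u - w) v = 0"
proof -
  obtain P where P: "P \<in> {(v, T v) | v. v \<in> S'}" and Po: "\<forall>z\<in>{(v, T v) | v. v \<in> S'}. cinner ((u, T u) - P) z = 0"
    using projection_exists[OF sub cl] by blast
  then obtain w where w: "w \<in> S'" "P = (w, T w)" by blast
  have "T (u - w) = T u - T w" using clinear_on_diff[OF lin u] w S'Sd by blast
  then have "\<forall>v\<in>S'. ginner T (u - w) v = 0" using Po w unfolding ginner_Pair by auto
  with w show ?thesis by blast
qed

lemma ginner_self: "ginner f x x = complex_of_real ((norm x)\<^sup>2 + (norm (f x))\<^sup>2)"
  by (simp add: ginner_def cinner_self)

lemma gproj_eq:
  assumes lin: "clinear_on T f" and ST: "S \<subseteq> T" and sub: "csubspace S" and v: "v \<in> T"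
    and w0: "w0 \<in> S" and o: "\<forall>z\<in>S. ginner f (v - w0) z = 0"
  shows "gproj S f v = w0"
  unfolding gproj_def
proof (rule the_equality)
  show "w0 \<in> S \<and> (\<forall>z\<in>S. ginner f (v - w0) z = 0)" using w0 o by blast
next
  fix w assume w: "w \<in> S \<and> (\<forall>z\<in>S. ginner f (v - w) z = 0)"
  define d where "d = w - w0"
  have dS: "d \<in> S" unfolding d_def using csubspace_diff[OF sub] w w0 by blast
  have vw: "v - w \<in> T" "v - w0 \<in> T" using csubspace_diff[OF clinear_on_sub[OF lin]] v w w0 ST by blast+
  have "d = (v - w0) - (v - w)" unfolding d_def by simp
  then have fd: "f d = f (v - w0) - f (v - w)" using clinear_on_diff[OF lin vw(2) vw(1)] by simp
  have "ginner f d d = ginner f (v - w0) d - ginner f (v - w) d"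
    unfolding ginner_def fd by (simp add: cinner_diff_left \<open>d = (v - w0) - (v - w)\<close>)
  also have "\<dots> = 0" using o w dS by simp
  finally have "complex_of_real ((norm d)\<^sup>2 + (norm (f d))\<^sup>2) = 0" unfolding ginner_self .
  then have "(norm d)\<^sup>2 + (norm (f d))\<^sup>2 = 0" by (simp only: of_real_eq_0_iff)
  then have "(norm d)\<^sup>2 = 0" using zero_le_power2[of "norm d"] zero_le_power2[of "norm (f d)"] by linarith
  then have "d = 0" by simp
  then show "w = w0" unfolding d_def by simp
qed

locale setting =
  fixes domG :: "'h0::chilbert_space set" and G :: "'h0 \<Rightarrow> 'h1::chilbert_space"
    and domD :: "'h1 set" and D :: "'h1 \<Rightarrow> 'h0"
    and a :: "'h1 \<Rightarrow> 'h1" and m :: "'h0 \<Rightarrow> 'h0"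
  assumes G: "densely_defined_closed domG G"
    and D: "densely_defined_closed domD D"
    and GD: "op_subset (adj_dom domG G) (\<lambda>y. - adj domG G y) domD D"
    and a: "bounded_clinear_op a" "coercive a"
    and m: "bounded_clinear_op m" "coercive m"
begin

abbreviation "Adom \<equiv> adj_dom domG G"
abbreviation "A \<equiv> adj domG G"
abbreviation "Bdom \<equiv> adj_dom domD D"
abbreviation "B \<equiv> adj domD D"
abbreviation "BDG \<equiv> BD_G domG G domD D"
abbreviation "BDD \<equiv> BD_D domG G domD D"

lemma densG: "closure domG = UNIV" and linG: "clinear_on domG G"
  and clG: "closed {(x, G x) | x. x \<in> domG}"
  using G unfolding densely_defined_closed_def by auto
lemma densD: "closure domD = UNIV" and linD: "clinear_on domD D"
  and clD: "closed {(x, D x) | x. x \<in> domD}"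
  using D unfolding densely_defined_closed_def by auto
lemma subG: "csubspace domG" using clinear_on_sub[OF linG] .
lemma subD: "csubspace domD" using clinear_on_sub[OF linD] .

lemma lina: "clinear_on UNIV a" using a(1) by (simp add: bounded_clinear_op_def)
lemma linm: "clinear_on UNIV m" using m(1) by (simp add: bounded_clinear_op_def)

lemma a_add: "a (x + y) = a x + a y" using clinear_on_add[OF lina] by simp
lemma a_scaleC: "a (scaleC c x) = scaleC c (a x)" using clinear_on_scaleC[OF lina] by simp
lemma a_diff: "a (x - y) = a x - a y" using clinear_on_diff[OF lina] by simp
lemma a_zero: "a 0 = 0" using clinear_on_zero[OF lina] .
lemma a_minus: "a (- x) = - a x" using clinear_on_minus[OF lina] by simp
lemma m_add: "m (x + y) = m x + m y" using clinear_on_add[OF linm] by simp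
lemma m_scaleC: "m (scaleC c x) = scaleC c (m x)" using clinear_on_scaleC[OF linm] by simp
lemma m_diff: "m (x - y) = m x - m y" using clinear_on_diff[OF linm] by simp
lemma m_zero: "m 0 = 0" using clinear_on_zero[OF linm] .

lemma A_prop: "y \<in> Adom \<Longrightarrow> x \<in> domG \<Longrightarrow> cinner (G x) y = cinner x (A y)"
  by (rule adj_prop[OF densG])
lemma B_prop: "v \<in> Bdom \<Longrightarrow> x \<in> domD \<Longrightarrow> cinner (D x) v = cinner x (B v)"
  by (rule adj_prop[OF densD])
lemma subA: "csubspace Adom" by (rule adj_dom_subspace[OF densG])
lemma subB: "csubspace Bdom" by (rule adj_dom_subspace[OF densD])

lemma GD_dom: "y \<in> Adom \<Longrightarrow> y \<in> domD" and GD_eq: "y \<in> Adom \<Longrightarrow> D y = - A y"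
  using GD unfolding op_subset_def by auto

lemma Bdom_G: assumes v: "v \<in> Bdom" shows "v \<in> domG" "G v = - B v"
proof -
  have "\<forall>y\<in>Adom. cinner (A y) v = cinner y (- B v)"
  proof
    fix y assume y: "y \<in> Adom"
    have "A y = - D y" using GD_eq[OF y] by simp
    then have "cinner (A y) v = - cinner (D y) v" by (simp add: cinner_minus_left)
    also have "\<dots> = cinner y (- B v)" using B_prop[OF v GD_dom[OF y]] by (simp add: cinner_minus_right)
    finally show "cinner (A y) v = cinner y (- B v)" .
  qed
  from double_adj[OF G this] show "v \<in> domG" "G v = - B v" by auto
qed

lemma BDG_iff: "x \<in> BDG \<longleftrightarrow> x \<in> domG \<and> (\<forall>y\<in>Bdom. ginner G x y = 0)"
  by (simp add: BD_G_def Gc_dom_def)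
lemma BDD_iff: "y \<in> BDD \<longleftrightarrow> y \<in> domD \<and> (\<forall>z\<in>Adom. ginner D y z = 0)"
  by (simp add: BD_D_def Dc_dom_def)

lemma BDG_sub: "csubspace BDG"
proof -
  have "0 \<in> BDG" unfolding BDG_iff using csubspace_0[OF subG] clinear_on_zero[OF linG]
    by (simp add: ginner_def)
  moreover have "x + y \<in> BDG" if x: "x \<in> BDG" and y: "y \<in> BDG" for x y
    unfolding BDG_iff
  proof (intro conjI ballI)
    show "x + y \<in> domG" using csubspace_add[OF subG] x y BDG_iff by blast
    fix z assume z: "z \<in> Bdom"
    have "ginner G (x + y) z = ginner G x z + ginner G y z"
      using clinear_on_add[OF linG] x y BDG_iff by (simp add: ginner_def cinner_add_left algebra_simps)
    then show "ginner G (x + y) z = 0" using x y z BDG_iff by simp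
  qed
  moreover have "scaleC c x \<in> BDG" if x: "x \<in> BDG" for c x
    unfolding BDG_iff
  proof (intro conjI ballI)
    show "scaleC c x \<in> domG" using csubspace_scaleC[OF subG] x BDG_iff by blast
    fix z assume z: "z \<in> Bdom"
    have "ginner G (scaleC c x) z = cnj c * ginner G x z"
      using clinear_on_scaleC[OF linG] x BDG_iff by (simp add: ginner_def cinner_scaleC_left algebra_simps)
    then show "ginner G (scaleC c x) z = 0" using x z BDG_iff by simp
  qed
  ultimately show ?thesis unfolding csubspace_def by blast
qed

lemma BDG_domG: "x \<in> BDG \<Longrightarrow> x \<in> domG" by (simp add: BDG_iff)

lemma BDG_D: assumes f: "f \<in> BDG" shows "G f \<in> domD" "D (G f) = f"
proof -
  have fG: "f \<in> domG" and fo: "\<forall>y\<in>Bdom. ginner G f y = 0" using f BDG_iff by auto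
  have "\<forall>y\<in>Bdom. cinner (B y) (G f) = cinner y f"
  proof
    fix y assume y: "y \<in> Bdom"
    have "cinner f y + cinner (G f) (G y) = 0" using fo y by (simp add: ginner_def)
    then have "cinner f y = cinner (G f) (B y)" using Bdom_G(2)[OF y]
      by (simp add: cinner_minus_right eq_neg_iff_add_eq_0)
    then show "cinner (B y) (G f) = cinner y f"
      by (metis cinner_commute)
  qed
  from double_adj[OF D this] show "G f \<in> domD" "D (G f) = f" by auto
qed

lemma BDG_BDD: assumes f: "f \<in> BDG" shows "G f \<in> BDD"
  unfolding BDD_iff
proof (intro conjI ballI)
  show "G f \<in> domD" using BDG_D[OF f] by simp
  fix z assume z: "z \<in> Adom"
  have "ginner D (G f) z = cinner (G f) z + cinner f (D z)" unfolding ginner_def BDG_D(2)[OF f] ..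
  also have "\<dots> = cinner f (A z) + cinner f (- A z)"
    using A_prop[OF z BDG_domG[OF f]] GD_eq[OF z] by simp
  also have "\<dots> = 0" by (simp add: cinner_minus_right)
  finally show "ginner D (G f) z = 0" .
qed

lemma Gam0_eq: "{(v, G v) | v. v \<in> Bdom} = {(y, - B y) | y. y \<in> Bdom}"
  using Bdom_G by auto
lemma GamA_eq: "{(y, D y) | y. y \<in> Adom} = {(y, - A y) | y. y \<in> Adom}"
  using GD_eq by auto

lemma decompG: assumes u: "u \<in> domG" shows "\<exists>w\<in>Bdom. u - w \<in> BDG"
proof -
  have linB: "clinear_on Bdom G" by (rule clinear_on_mono[OF linG _ subB]) (use Bdom_G in auto)
  have "\<exists>w\<in>Bdom. \<forall>v\<in>Bdom. ginner G (u - w) v = 0"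
  proof (rule decomp[OF linG _ _ _ u])
    show "Bdom \<subseteq> domG" using Bdom_G by auto
    show "csubspace {(v, G v) |v. v \<in> Bdom}" by (rule graph_subspace[OF linB])
    show "closed {(v, G v) |v. v \<in> Bdom}" unfolding Gam0_eq by (rule closed_neg_adj_graph[OF densD])
  qed
  then obtain w where w: "w \<in> Bdom" "\<forall>v\<in>Bdom. ginner G (u - w) v = 0" by blast
  have "u - w \<in> domG" using csubspace_diff[OF subG u Bdom_G(1)[OF w(1)]] .
  then show ?thesis using w BDG_iff by blast
qed

lemma decompD: assumes z: "z \<in> domD" shows "\<exists>y\<in>Adom. z - y \<in> BDD"
proof -
  have linA: "clinear_on Adom D" by (rule clinear_on_mono[OF linD _ subA]) (use GD_dom in auto)
  have "\<exists>w\<in>Adom. \<forall>v\<in>Adom. ginner D (z - w) v = 0"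
  proof (rule decomp[OF linD _ _ _ z])
    show "Adom \<subseteq> domD" using GD_dom by auto
    show "csubspace {(v, D v) |v. v \<in> Adom}" by (rule graph_subspace[OF linA])
    show "closed {(v, D v) |v. v \<in> Adom}" unfolding GamA_eq by (rule closed_neg_adj_graph[OF densG])
  qed
  then obtain w where w: "w \<in> Adom" "\<forall>v\<in>Adom. ginner D (z - w) v = 0" by blast
  have "z - w \<in> domD" using csubspace_diff[OF subD z GD_dom[OF w(1)]] .
  then show ?thesis using w BDD_iff by blast
qed

lemma gprojG: assumes v: "v \<in> domG" and u0: "u0 \<in> BDG" and vu: "v - u0 \<in> Bdom"
  shows "gproj BDG G v = u0"
proof (rule gproj_eq[OF linG _ BDG_sub v u0])
  show "BDG \<subseteq> domG" using BDG_domG by auto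
  show "\<forall>z\<in>BDG. ginner G (v - u0) z = 0"
  proof
    fix z assume "z \<in> BDG"
    then have "ginner G z (v - u0) = 0" using vu BDG_iff by blast
    then show "ginner G (v - u0) z = 0" using ginner_commute[of G "v - u0" z] by simp
  qed
qed

lemma BDD_sub: "csubspace BDD"
proof -
  have "0 \<in> BDD" unfolding BDD_iff using csubspace_0[OF subD] clinear_on_zero[OF linD]
    by (simp add: ginner_def)
  moreover have "x + y \<in> BDD" if x: "x \<in> BDD" and y: "y \<in> BDD" for x y
    unfolding BDD_iff
  proof (intro conjI ballI)
    show "x + y \<in> domD" using csubspace_add[OF subD] x y BDD_iff by blast
    fix z assume z: "z \<in> Adom"
    have "ginner D (x + y) z = ginner D x z + ginner D y z"
      using clinear_on_add[OF linD] x y BDD_iff by (simp add: ginner_def cinner_add_left algebra_simps)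
    then show "ginner D (x + y) z = 0" using x y z BDD_iff by simp
  qed
  moreover have "scaleC c x \<in> BDD" if x: "x \<in> BDD" for c x
    unfolding BDD_iff
  proof (intro conjI ballI)
    show "scaleC c x \<in> domD" using csubspace_scaleC[OF subD] x BDD_iff by blast
    fix z assume z: "z \<in> Adom"
    have "ginner D (scaleC c x) z = cnj c * ginner D x z"
      using clinear_on_scaleC[OF linD] x BDD_iff by (simp add: ginner_def cinner_scaleC_left algebra_simps)
    then show "ginner D (scaleC c x) z = 0" using x z BDD_iff by simp
  qed
  ultimately show ?thesis unfolding csubspace_def by blast
qed

lemma gprojD: assumes z: "z \<in> domD" and w0: "w0 \<in> BDD" and zw: "z - w0 \<in> Adom"
  shows "gproj BDD D z = w0"
proof (rule gproj_eq[OF linD _ BDD_sub z w0])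
  show "BDD \<subseteq> domD" using BDD_iff by auto
  show "\<forall>y\<in>BDD. ginner D (z - w0) y = 0"
  proof
    fix y assume "y \<in> BDD"
    then have "ginner D y (z - w0) = 0" using zw BDD_iff by blast
    then show "ginner D (z - w0) y = 0" using ginner_commute[of D "z - w0" y] by simp
  qed
qed

lemma gprojG_props: assumes v: "v \<in> domG"
  shows "gproj BDG G v \<in> BDG" "v - gproj BDG G v \<in> Bdom"
proof -
  obtain w where w: "w \<in> Bdom" "v - w \<in> BDG" using decompG[OF v] by blast
  have "gproj BDG G v = v - w" by (rule gprojG[OF v w(2)]) (use w(1) in simp)
  then show "gproj BDG G v \<in> BDG" "v - gproj BDG G v \<in> Bdom" using w by auto
qed

lemma gprojD_props: assumes z: "z \<in> domD"
  shows "gproj BDD D z \<in> BDD" "z - gproj BDD D z \<in> Adom"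
proof -
  obtain w where w: "w \<in> Adom" "z - w \<in> BDD" using decompD[OF z] by blast
  have "gproj BDD D z = z - w" by (rule gprojD[OF z w(2)]) (use w(1) in simp)
  then show "gproj BDD D z \<in> BDD" "z - gproj BDD D z \<in> Adom" using w by auto
qed

end

context setting
begin

definition "Mp = (\<lambda>P. (m (fst P), a (snd P)))"

lemma Mp_add: "Mp (x + y) = Mp x + Mp y"
  by (simp add: Mp_def m_add a_add)
lemma Mp_scaleC: "Mp (scaleC c x) = scaleC c (Mp x)"
  by (simp add: Mp_def m_scaleC a_scaleC scaleC_prod_def)
lemma Mp_Pair: "Mp (p, r) = (m p, a r)" by (simp add: Mp_def)

lemma Mp_bound: "\<exists>K. \<forall>x. norm (Mp x) \<le> K * norm x"
proof -
  obtain Km where Km: "Km \<ge> 0" "\<forall>x. norm (m x) \<le> Km * norm x" using bounded_clinear_op_bound[OF m(1)] by blast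
  obtain Ka where Ka: "Ka \<ge> 0" "\<forall>x. norm (a x) \<le> Ka * norm x" using bounded_clinear_op_bound[OF a(1)] by blast
  have "norm (Mp (p, r)) \<le> (Km + Ka) * norm (p, r)" for p r
  proof -
    have "norm (Mp (p, r)) \<le> norm (m p) + norm (a r)" unfolding Mp_Pair by (rule norm_Pair_le)
    also have "\<dots> \<le> Km * norm p + Ka * norm r" using Km Ka by (meson add_mono)
    also have "\<dots> \<le> Km * norm (p, r) + Ka * norm (p, r)"
      using Km(1) Ka(1) norm_fst_le[of p r] norm_snd_le[of r p]
      by (intro add_mono mult_left_mono) auto
    finally show ?thesis by (simp add: algebra_simps)
  qed
  then show ?thesis by (metis prod.collapse)
qed

lemma Mp_coercive: "\<exists>\<mu>>0. \<forall>x. \<mu> * (norm x)\<^sup>2 \<le> Re (cinner (Mp x) x)"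
proof -
  obtain \<mu>m where mm: "\<mu>m > 0" "\<forall>x. \<mu>m * (norm x)\<^sup>2 \<le> Re (cinner (m x) x)" using coercive_ex[OF m(2)] by blast
  obtain \<mu>a where ma: "\<mu>a > 0" "\<forall>x. \<mu>a * (norm x)\<^sup>2 \<le> Re (cinner (a x) x)" using coercive_ex[OF a(2)] by blast
  define \<mu> where "\<mu> = min \<mu>m \<mu>a"
  have "\<mu> * (norm (p, r))\<^sup>2 \<le> Re (cinner (Mp (p, r)) (p, r))" for p r
  proof -
    have "\<mu> * (norm (p, r))\<^sup>2 = \<mu> * (norm p)\<^sup>2 + \<mu> * (norm r)\<^sup>2" by (simp add: norm_Pair_sq algebra_simps)
    also have "\<dots> \<le> \<mu>m * (norm p)\<^sup>2 + \<mu>a * (norm r)\<^sup>2"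
      unfolding \<mu>_def by (intro add_mono mult_right_mono) auto
    also have "\<dots> \<le> Re (cinner (m p) p) + Re (cinner (a r) r)" using mm ma by (meson add_mono)
    also have "\<dots> = Re (cinner (Mp (p, r)) (p, r))" by (simp add: Mp_Pair cinner_Pair)
    finally show ?thesis .
  qed
  moreover have "\<mu> > 0" unfolding \<mu>_def using mm ma by simp
  ultimately show ?thesis by (metis prod.collapse)
qed

lemma lm_Mp:
  assumes sub: "csubspace S" and cl: "closed S"
  shows "\<exists>X\<in>S. \<forall>V\<in>S. cinner (Mp X - Y) V = 0"
proof -
  obtain K where K: "\<forall>x. norm (Mp x) \<le> K * norm x" using Mp_bound by blast
  obtain \<mu> where mu: "\<mu> > 0" "\<forall>x. \<mu> * (norm x)\<^sup>2 \<le> Re (cinner (Mp x) x)" using Mp_coercive by blast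
  show ?thesis by (rule lax_milgram[OF sub cl Mp_add Mp_scaleC]) (use K mu in auto)
qed

subsection \<open>The operator a is invertible\<close>

lemma a_inj: "inj a"
proof (rule injI)
  fix x y assume "a x = a y"
  then have "a (x - y) = 0" by (simp add: a_diff)
  then have "x - y = 0" using coercive_zero[OF a(2), of "x - y"] by simp
  then show "x = y" by simp
qed

lemma a_surj: "surj a"
proof -
  have "y \<in> range a" for y
  proof -
    obtain K where K: "K \<ge> 0" "\<forall>x. norm (a x) \<le> K * norm x" using bounded_clinear_op_bound[OF a(1)] by blast
    obtain \<mu> where mu: "\<mu> > 0" "\<forall>x. \<mu> * (norm x)\<^sup>2 \<le> Re (cinner (a x) x)" using coercive_ex[OF a(2)] by blast
    have sU: "csubspace (UNIV :: 'h1 set)" by (simp add: csubspace_def)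
    obtain X where "\<forall>V\<in>UNIV. cinner (a X - y) V = 0"
      using lax_milgram[OF sU closed_UNIV a_add a_scaleC, of K \<mu> y] K mu by auto
    then have "cinner (a X - y) (a X - y) = 0" by blast
    then have "a X = y" by simp
    then show ?thesis by blast
  qed
  then show ?thesis by blast
qed

lemma a_inv1: "a (inv a y) = y" using a_surj by (simp add: surj_f_inv_f)
lemma a_inv2: "inv a (a x) = x" using a_inj by (simp add: inv_f_f)

lemma ainv_add: "inv a (x + y) = inv a x + inv a y"
  by (metis a_add a_inv1 a_inv2)
lemma ainv_scaleC: "inv a (scaleC c x) = scaleC c (inv a x)"
  by (metis a_scaleC a_inv1 a_inv2)
lemma ainv_diff: "inv a (x - y) = inv a x - inv a y"
  by (metis a_diff a_inv1 a_inv2)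
lemma ainv_minus: "inv a (- x) = - inv a x"
  by (metis a_minus a_inv1 a_inv2)
lemma ainv_zero: "inv a 0 = 0"
  by (metis a_zero a_inv2)

lemma ainv_coercive: "0 \<le> Re (cinner (inv a q) q)"
proof -
  define p where "p = inv a q"
  have q: "q = a p" unfolding p_def by (simp add: a_inv1)
  have "Re (cinner p (a p)) = Re (cinner (a p) p)" by (metis cinner_commute cnj.sel(1))
  moreover have "inv a q = p" unfolding p_def ..
  ultimately show ?thesis using coercive_Re_nonneg[OF a(2), of p] q by simp
qed

lemma a_bound_below: "\<exists>\<mu>>0. \<forall>x. \<mu> * norm x \<le> norm (a x)"
proof -
  obtain \<mu> where mu: "\<mu> > 0" "\<forall>x. \<mu> * (norm x)\<^sup>2 \<le> Re (cinner (a x) x)" using coercive_ex[OF a(2)] by blast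
  have "\<mu> * norm x \<le> norm (a x)" for x
  proof (cases "x = 0")
    case True then show ?thesis by simp
  next
    case False
    have "\<mu> * norm x * norm x \<le> Re (cinner (a x) x)" using mu by (simp add: power2_eq_square mult.assoc)
    also have "\<dots> \<le> cmod (cinner (a x) x)" by (rule complex_Re_le_cmod)
    also have "\<dots> \<le> norm (a x) * norm x" by (rule cauchy_schwarz)
    finally show ?thesis using False by simp
  qed
  then show ?thesis using mu by blast
qed

end

context setting
begin

lemma G_add: "x \<in> domG \<Longrightarrow> y \<in> domG \<Longrightarrow> G (x + y) = G x + G y" by (rule clinear_on_add[OF linG])
lemma G_diff: "x \<in> domG \<Longrightarrow> y \<in> domG \<Longrightarrow> G (x - y) = G x - G y" by (rule clinear_on_diff[OF linG])
lemma G_scaleC: "x \<in> domG \<Longrightarrow> G (scaleC c x) = scaleC c (G x)" by (rule clinear_on_scaleC[OF linG])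
lemma G_zero: "G 0 = 0" by (rule clinear_on_zero[OF linG])
lemma D_add: "x \<in> domD \<Longrightarrow> y \<in> domD \<Longrightarrow> D (x + y) = D x + D y" by (rule clinear_on_add[OF linD])
lemma D_diff: "x \<in> domD \<Longrightarrow> y \<in> domD \<Longrightarrow> D (x - y) = D x - D y" by (rule clinear_on_diff[OF linD])

lemma GamG_sub: "csubspace {(x, G x) | x. x \<in> domG}" by (rule graph_subspace[OF linG])
lemma Gam0_sub: "csubspace {(v, G v) | v. v \<in> Bdom}"
  by (rule graph_subspace[OF clinear_on_mono[OF linG _ subB]]) (use Bdom_G in auto)
lemma Gam0_closed: "closed {(v, G v) | v. v \<in> Bdom}"
  unfolding Gam0_eq by (rule closed_neg_adj_graph[OF densD])

definition "sol u u0 \<longleftrightarrow> u \<in> domG \<and> a (G u) \<in> domD \<and> m u - D (a (G u)) = 0 \<and> u - u0 \<in> Bdom"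

lemma dir_exists: assumes u0: "u0 \<in> domG" shows "\<exists>u. sol u u0"
proof -
  obtain X where X: "X \<in> {(v, G v) | v. v \<in> Bdom}"
    and Xo: "\<forall>V\<in>{(v, G v) | v. v \<in> Bdom}. cinner (Mp X - (- Mp (u0, G u0))) V = 0"
    using lm_Mp[OF Gam0_sub Gam0_closed] by blast
  then obtain w where w: "w \<in> Bdom" "X = (w, G w)" by blast
  have wG: "w \<in> domG" using Bdom_G(1)[OF w(1)] .
  define u where "u = u0 + w"
  have uG: "u \<in> domG" unfolding u_def using csubspace_add[OF subG u0 wG] .
  have Gu: "G u = G u0 + G w" unfolding u_def using G_add[OF u0 wG] .
  have mu: "m u = m u0 + m w" unfolding u_def m_add ..
  have "Mp X - (- Mp (u0, G u0)) = (m w + m u0, a (G w) + a (G u0))" unfolding w(2) Mp_Pair by simp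
  also have "\<dots> = (m u, a (G u))" unfolding Gu mu a_add by (simp add: add.commute)
  finally have MX: "Mp X - (- Mp (u0, G u0)) = (m u, a (G u))" .
  have o: "cinner (m u) v + cinner (a (G u)) (G v) = 0" if v: "v \<in> Bdom" for v
    using Xo v unfolding MX by (auto simp: cinner_Pair)
  have "\<forall>v\<in>Bdom. cinner (B v) (a (G u)) = cinner v (m u)"
  proof
    fix v assume v: "v \<in> Bdom"
    have "cinner (a (G u)) (B v) = cinner (m u) v"
      using o[OF v] Bdom_G(2)[OF v] by (simp add: cinner_minus_right eq_neg_iff_add_eq_0)
    then show "cinner (B v) (a (G u)) = cinner v (m u)" by (metis cinner_commute)
  qed
  from double_adj[OF D this] have "a (G u) \<in> domD" "D (a (G u)) = m u" by auto
  moreover have "u - u0 \<in> Bdom" unfolding u_def using w(1) by simp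
  ultimately show ?thesis using uG unfolding sol_def by auto
qed

lemma dir_unique: assumes s1: "sol u1 u0" and s2: "sol u2 u0" shows "u1 = u2"
proof -
  have u1: "u1 \<in> domG" "a (G u1) \<in> domD" "D (a (G u1)) = m u1" "u1 - u0 \<in> Bdom" using s1 unfolding sol_def by auto
  have u2: "u2 \<in> domG" "a (G u2) \<in> domD" "D (a (G u2)) = m u2" "u2 - u0 \<in> Bdom" using s2 unfolding sol_def by auto
  define w where "w = u1 - u2"
  have wB: "w \<in> Bdom" unfolding w_def using csubspace_diff[OF subB u1(4) u2(4)] by simp
  have wG: "w \<in> domG" unfolding w_def using csubspace_diff[OF subG u1(1) u2(1)] .
  have az: "a (G w) = a (G u1) - a (G u2)" unfolding w_def G_diff[OF u1(1) u2(1)] a_diff ..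
  have zD: "a (G w) \<in> domD" unfolding az using csubspace_diff[OF subD u1(2) u2(2)] .
  have "m w = m u1 - m u2" unfolding w_def m_diff ..
  also have "\<dots> = D (a (G u1)) - D (a (G u2))" using u1(3) u2(3) by simp
  also have "\<dots> = D (a (G u1) - a (G u2))" using D_diff[OF u1(2) u2(2)] by simp
  also have "\<dots> = D (a (G w))" using az by simp
  finally have mw: "m w = D (a (G w))" .
  have "cinner (m w) w = cinner (a (G w)) (B w)" unfolding mw using B_prop[OF wB zD] .
  also have "\<dots> = - cinner (a (G w)) (G w)" using Bdom_G(2)[OF wB] by (simp add: cinner_minus_right)
  finally have "Re (cinner (m w) w) \<le> 0" using coercive_Re_nonneg[OF a(2), of "G w"] by simp
  then have "w = 0" by (rule coercive_zero[OF m(2)])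
  then show ?thesis unfolding w_def by simp
qed

lemma dir_sol_eq: assumes "sol u u0" shows "dir_sol domG G domD D a m u0 = u"
  unfolding dir_sol_def Gc_dom_def
proof (rule the_equality)
  show "u \<in> domG \<and> a (G u) \<in> domD \<and> m u - D (a (G u)) = 0 \<and> u - u0 \<in> Bdom" using assms sol_def by auto
  fix u' assume "u' \<in> domG \<and> a (G u') \<in> domD \<and> m u' - D (a (G u')) = 0 \<and> u' - u0 \<in> Bdom"
  then have "sol u' u0" unfolding sol_def by auto
  then show "u' = u" using dir_unique assms by blast
qed

lemma dir_sol_props: assumes "u0 \<in> domG" shows "sol (dir_sol domG G domD D a m u0) u0"
proof -
  obtain u where "sol u u0" using dir_exists[OF assms] by blast
  then show ?thesis using dir_sol_eq by simp
qed

subsection \<open>Block operator\<close>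

lemma block_dom_iff: "(u, q) \<in> block_dom domG G \<longleftrightarrow> u \<in> domG \<and> q \<in> Adom"
  by (simp add: block_dom_def Dc_dom_def)

lemma block_op_Pair: "block_op domG G a m (u, q) = (m u + A q, - G u + inv a q)"
  by (simp add: block_op_def Dc_def)

lemma block_exists: "\<exists>x\<in>block_dom domG G. block_op domG G a m x = y"
proof -
  obtain y1 y2 where y: "y = (y1, y2)" by fastforce
  obtain X where X: "X \<in> {(x, G x) | x. x \<in> domG}"
    and Xo: "\<forall>V\<in>{(x, G x) | x. x \<in> domG}. cinner (Mp X - (y1, - a y2)) V = 0"
    using lm_Mp[OF GamG_sub clG] by blast
  then obtain u where u: "u \<in> domG" "X = (u, G u)" by blast
  define q where "q = a (G u + y2)"
  have MX: "Mp X - (y1, - a y2) = (m u - y1, q)" unfolding u(2) Mp_Pair q_def by (simp add: a_add)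
  have o: "cinner (m u - y1) v + cinner q (G v) = 0" if v: "v \<in> domG" for v
    using Xo v unfolding MX by (auto simp: cinner_Pair)
  have "\<forall>v\<in>domG. cinner (G v) q = cinner v (y1 - m u)"
  proof
    fix v assume v: "v \<in> domG"
    have "cinner q (G v) = cinner (y1 - m u) v"
      using o[OF v] by (simp add: cinner_diff_left eq_neg_iff_add_eq_0 algebra_simps)
    then show "cinner (G v) q = cinner v (y1 - m u)" by (metis cinner_commute)
  qed
  from adj_eq[OF densG this] have qA: "q \<in> Adom" "A q = y1 - m u" by auto
  have iq: "inv a q = G u + y2" unfolding q_def a_inv2 ..
  have "block_op domG G a m (u, q) = y"
    unfolding block_op_Pair qA(2) iq y by simp
  moreover have "(u, q) \<in> block_dom domG G" using u qA block_dom_iff by simp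
  ultimately show ?thesis by blast
qed

lemma block_unique:
  assumes x1: "x1 \<in> block_dom domG G" and x2: "x2 \<in> block_dom domG G"
    and eq: "block_op domG G a m x1 = block_op domG G a m x2"
  shows "x1 = x2"
proof -
  obtain u1 q1 where p1: "x1 = (u1, q1)" by fastforce
  obtain u2 q2 where p2: "x2 = (u2, q2)" by fastforce
  have d1: "u1 \<in> domG" "q1 \<in> Adom" using x1 p1 block_dom_iff by auto
  have d2: "u2 \<in> domG" "q2 \<in> Adom" using x2 p2 block_dom_iff by auto
  define u where "u = u1 - u2"
  define q where "q = q1 - q2"
  have uG: "u \<in> domG" unfolding u_def using csubspace_diff[OF subG d1(1) d2(1)] .
  have qA: "q \<in> Adom" unfolding q_def using csubspace_diff[OF subA d1(2) d2(2)] .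
  have e1: "m u1 + A q1 = m u2 + A q2" and e2: "- G u1 + inv a q1 = - G u2 + inv a q2"
    using eq unfolding p1 p2 block_op_Pair by auto
  have E1: "m u + A q = 0"
    unfolding u_def q_def m_diff adj_diff[OF densG d1(2) d2(2)] using e1 by (simp add: algebra_simps)
  have E2: "inv a q = G u"
    unfolding u_def q_def ainv_diff G_diff[OF d1(1) d2(1)] using e2 by (simp add: algebra_simps)
  have "m u = - A q" using E1 by (simp add: eq_neg_iff_add_eq_0)
  then have "cinner (m u) u = - cinner (A q) u" by (simp add: cinner_minus_left)
  also have "cinner (A q) u = cnj (cinner (G u) q)"
    using A_prop[OF qA uG] by (metis cinner_commute)
  also have "\<dots> = cnj (cinner (inv a q) q)" unfolding E2 ..
  finally have "Re (cinner (m u) u) = - Re (cinner (inv a q) q)" by simp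
  then have "Re (cinner (m u) u) \<le> 0" using ainv_coercive[of q] by simp
  then have u0: "u = 0" by (rule coercive_zero[OF m(2)])
  then have "inv a q = 0" using E2 G_zero by simp
  then have "q = 0" by (metis a_inv1 a_zero)
  then show ?thesis using u0 unfolding p1 p2 u_def q_def by simp
qed

lemma block_inv_eq:
  assumes "x \<in> block_dom domG G" "block_op domG G a m x = y"
  shows "block_inv domG G a m y = x"
  unfolding block_inv_def
  by (rule the_equality) (use assms block_unique in blast)+

lemma block_inv_props: "block_inv domG G a m y \<in> block_dom domG G"
  "block_op domG G a m (block_inv domG G a m y) = y"
proof -
  obtain x where "x \<in> block_dom domG G" "block_op domG G a m x = y" using block_exists by blast
  then show "block_inv domG G a m y \<in> block_dom domG G" "block_op domG G a m (block_inv domG G a m y) = y"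
    using block_inv_eq by auto
qed

end

context setting
begin

lemma ginner_add_right: "y1 \<in> domG \<Longrightarrow> y2 \<in> domG \<Longrightarrow> ginner G x (y1 + y2) = ginner G x y1 + ginner G x y2"
  by (simp add: ginner_def G_add cinner_add_right)
lemma ginner_diff_right: "y1 \<in> domG \<Longrightarrow> y2 \<in> domG \<Longrightarrow> ginner G x (y1 - y2) = ginner G x y1 - ginner G x y2"
  by (simp add: ginner_def G_diff cinner_diff_right)
lemma ginner_scaleC_right: "y \<in> domG \<Longrightarrow> ginner G x (scaleC c y) = c * ginner G x y"
  by (simp add: ginner_def G_scaleC cinner_scaleC_right algebra_simps)

lemma gnorm_zero_iff: "ginner G d d = 0 \<Longrightarrow> d = 0"
proof -
  assume "ginner G d d = 0"
  then have "complex_of_real ((norm d)\<^sup>2 + (norm (G d))\<^sup>2) = 0" unfolding ginner_self .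
  then have "(norm d)\<^sup>2 + (norm (G d))\<^sup>2 = 0" by (simp only: of_real_eq_0_iff)
  then have "(norm d)\<^sup>2 = 0" using zero_le_power2[of "norm d"] zero_le_power2[of "norm (G d)"] by linarith
  then show "d = 0" by simp
qed

lemma block_op_add: "x1 \<in> block_dom domG G \<Longrightarrow> x2 \<in> block_dom domG G \<Longrightarrow>
    block_op domG G a m (x1 + x2) = block_op domG G a m x1 + block_op domG G a m x2"
  unfolding block_dom_def Dc_dom_def
  by (auto simp: block_op_def Dc_def m_add G_add ainv_add adj_add[OF densG])
lemma block_op_scaleC: "x \<in> block_dom domG G \<Longrightarrow>
    block_op domG G a m (scaleC c x) = scaleC c (block_op domG G a m x)"
  unfolding block_dom_def Dc_dom_def
  by (auto simp: block_op_def Dc_def m_scaleC G_scaleC ainv_scaleC adj_scaleC[OF densG]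
      scaleC_prod_def scaleC_diff_right scaleC_add_right scaleC_minus_right)

lemma block_dom_sub: "csubspace (block_dom domG G)"
  unfolding block_dom_def Dc_dom_def csubspace_def
  using csubspace_0[OF subG] csubspace_0[OF subA] csubspace_add[OF subG] csubspace_add[OF subA]
    csubspace_scaleC[OF subG] csubspace_scaleC[OF subA]
  by (auto simp: zero_prod_def scaleC_prod_def)

lemma block_inv_add: "block_inv domG G a m (y1 + y2) = block_inv domG G a m y1 + block_inv domG G a m y2"
  by (rule block_inv_eq)
    (simp_all add: block_op_add block_inv_props csubspace_add[OF block_dom_sub])
lemma block_inv_scaleC: "block_inv domG G a m (scaleC c y) = scaleC c (block_inv domG G a m y)"
  by (rule block_inv_eq)
    (simp_all add: block_op_scaleC block_inv_props csubspace_scaleC[OF block_dom_sub])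

lemma gproj_add: "v1 \<in> domG \<Longrightarrow> v2 \<in> domG \<Longrightarrow> gproj BDG G (v1 + v2) = gproj BDG G v1 + gproj BDG G v2"
proof -
  assume v: "v1 \<in> domG" "v2 \<in> domG"
  have e: "v1 + v2 - (gproj BDG G v1 + gproj BDG G v2) = (v1 - gproj BDG G v1) + (v2 - gproj BDG G v2)" by simp
  have "v1 + v2 - (gproj BDG G v1 + gproj BDG G v2) \<in> Bdom"
    unfolding e using csubspace_add[OF subB gprojG_props(2)[OF v(1)] gprojG_props(2)[OF v(2)]] .
  then show ?thesis
    using gprojG[OF csubspace_add[OF subG v] csubspace_add[OF BDG_sub gprojG_props(1)[OF v(1)] gprojG_props(1)[OF v(2)]]]
    by blast
qed

lemma gproj_scaleC: "v \<in> domG \<Longrightarrow> gproj BDG G (scaleC c v) = scaleC c (gproj BDG G v)"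
proof -
  assume v: "v \<in> domG"
  have e: "scaleC c v - scaleC c (gproj BDG G v) = scaleC c (v - gproj BDG G v)" by (simp add: scaleC_diff_right)
  have "scaleC c v - scaleC c (gproj BDG G v) \<in> Bdom"
    unfolding e using csubspace_scaleC[OF subB gprojG_props(2)[OF v]] .
  then show ?thesis
    using gprojG[OF csubspace_scaleC[OF subG v] csubspace_scaleC[OF BDG_sub gprojG_props(1)[OF v]]]
    by blast
qed

lemma gproj_le: assumes u: "u \<in> domG" shows "gnorm G (gproj BDG G u) \<le> gnorm G u"
proof -
  define u0 where "u0 = gproj BDG G u"
  define w where "w = u - u0"
  have u0B: "u0 \<in> BDG" and wB: "w \<in> Bdom" using gprojG_props[OF u] unfolding u0_def w_def by auto
  have u0G: "u0 \<in> domG" using BDG_domG[OF u0B] .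
  have wG: "w \<in> domG" using Bdom_G(1)[OF wB] .
  have "u = u0 + w" unfolding w_def by simp
  then have U: "(u, G u) = (u0, G u0) + (w, G w)" using G_add[OF u0G wG] by simp
  have o: "cinner (u0, G u0) (w, G w) = 0" using u0B wB BDG_iff ginner_Pair by metis
  have "(norm (u, G u))\<^sup>2 = (norm (u0, G u0))\<^sup>2 + (norm (w, G w))\<^sup>2"
    unfolding U norm_add_sq o by simp
  then have "(norm (u0, G u0))\<^sup>2 \<le> (norm (u, G u))\<^sup>2" by simp
  then show ?thesis unfolding gnorm_Pair u0_def by (simp add: power2_le_iff_abs_le)
qed

end

locale setting_k = setting domG G domD D a m
  for domG :: "'h0::chilbert_space set" and G :: "'h0 \<Rightarrow> 'h1::chilbert_space"
    and domD :: "'h1 set" and D :: "'h1 \<Rightarrow> 'h0"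
    and a :: "'h1 \<Rightarrow> 'h1" and m :: "'h0 \<Rightarrow> 'h0" +
  fixes \<kappa> :: "'h0 \<Rightarrow> 'h::chilbert_space"
  assumes kappa_lin: "clinear_on (BD_G domG G domD D) \<kappa>"
    and kappa_bdd: "\<exists>C. \<forall>x\<in>BD_G domG G domD D. norm (\<kappa> x) \<le> C * gnorm G x"
    and kappa_inj: "inj_on \<kappa> (BD_G domG G domD D)"
    and kappa_dense: "closure (\<kappa> ` BD_G domG G domD D) = UNIV"
begin

abbreviation "kadj \<equiv> kappa_adj domG G domD D \<kappa>"

lemma kbound: "\<exists>C\<ge>0. \<forall>x\<in>BDG. norm (\<kappa> x) \<le> C * gnorm G x"
proof -
  obtain C where C: "\<forall>x\<in>BDG. norm (\<kappa> x) \<le> C * gnorm G x" using kappa_bdd by blast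
  have "norm (\<kappa> x) \<le> max C 0 * gnorm G x" if "x \<in> BDG" for x
  proof -
    have g: "0 \<le> gnorm G x" by (simp add: gnorm_def)
    have "norm (\<kappa> x) \<le> C * gnorm G x" using C that by blast
    also have "\<dots> \<le> max C 0 * gnorm G x" using g by (intro mult_right_mono) auto
    finally show ?thesis .
  qed
  then show ?thesis by (intro exI[of _ "max C 0"]) auto
qed

lemma GamBD_eq: "{(x, G x) | x. x \<in> BDG} =
    {(x, G x) | x. x \<in> domG} \<inter> (\<Inter>y\<in>Bdom. {p. cinner (fst p) y + cinner (snd p) (G y) = 0})"
proof (intro equalityI subsetI)
  fix p assume "p \<in> {(x, G x) | x. x \<in> BDG}"
  then obtain x where x: "x \<in> BDG" "p = (x, G x)" by blast
  then have "x \<in> domG" "\<forall>y\<in>Bdom. ginner G x y = 0" using BDG_iff by auto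
  then show "p \<in> {(x, G x) | x. x \<in> domG} \<inter> (\<Inter>y\<in>Bdom. {p. cinner (fst p) y + cinner (snd p) (G y) = 0})"
    unfolding x(2) ginner_def by auto
next
  fix p assume p: "p \<in> {(x, G x) | x. x \<in> domG} \<inter> (\<Inter>y\<in>Bdom. {p. cinner (fst p) y + cinner (snd p) (G y) = 0})"
  then obtain x where x: "x \<in> domG" "p = (x, G x)" by blast
  have "\<forall>y\<in>Bdom. ginner G x y = 0" using p unfolding x(2) ginner_def by auto
  then have "x \<in> BDG" using x(1) BDG_iff by blast
  then show "p \<in> {(x, G x) | x. x \<in> BDG}" using x(2) by blast
qed

lemma GamBD_closed: "closed {(x, G x) | x. x \<in> BDG}"
  unfolding GamBD_eq
  by (intro closed_Int clG closed_INT ballI closed_Collect_eq) (auto intro!: continuous_intros)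

lemma GamBD_sub: "csubspace {(x, G x) | x. x \<in> BDG}"
  by (rule graph_subspace[OF clinear_on_mono[OF linG _ BDG_sub]]) (use BDG_domG in auto)

lemma kadj_ex: "\<exists>f\<in>BDG. \<forall>u\<in>BDG. cinner (\<kappa> u) \<psi> = ginner G u f"
proof -
  obtain C where C: "C \<ge> 0" "\<forall>x\<in>BDG. norm (\<kappa> x) \<le> C * gnorm G x" using kbound by blast
  define l where "l = (\<lambda>P::'h0 \<times> 'h1. cinner \<psi> (\<kappa> (fst P)))"
  have "\<exists>F\<in>{(x, G x) | x. x \<in> BDG}. \<forall>P\<in>{(x, G x) | x. x \<in> BDG}. l P = cinner F P"
  proof (rule riesz_subspace[OF GamBD_sub GamBD_closed])
    fix P1 P2 assume "P1 \<in> {(x, G x) | x. x \<in> BDG}" "P2 \<in> {(x, G x) | x. x \<in> BDG}"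
    then show "l (P1 + P2) = l P1 + l P2" unfolding l_def
      using clinear_on_add[OF kappa_lin] by (auto simp: cinner_add_right)
  next
    fix c P assume "P \<in> {(x, G x) | x. x \<in> BDG}"
    then show "l (scaleC c P) = c * l P" unfolding l_def
      using clinear_on_scaleC[OF kappa_lin] by (auto simp: cinner_scaleC_right)
  next
    fix P assume "P \<in> {(x, G x) | x. x \<in> BDG}"
    then obtain x where x: "x \<in> BDG" "P = (x, G x)" by blast
    have "cmod (l P) \<le> norm \<psi> * norm (\<kappa> x)" unfolding l_def x(2) by (simp add: cauchy_schwarz)
    also have "\<dots> \<le> norm \<psi> * (C * gnorm G x)" using C x by (simp add: mult_left_mono)
    finally show "cmod (l P) \<le> (norm \<psi> * C) * norm P" unfolding x(2) gnorm_Pair by (simp add: mult.assoc)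
  qed
  then obtain F where F: "F \<in> {(x, G x) | x. x \<in> BDG}" "\<forall>P\<in>{(x, G x) | x. x \<in> BDG}. l P = cinner F P" by blast
  then obtain f where f: "f \<in> BDG" "F = (f, G f)" by blast
  have "cinner (\<kappa> u) \<psi> = ginner G u f" if u: "u \<in> BDG" for u
  proof -
    have "cinner \<psi> (\<kappa> u) = ginner G f u" using F(2) u unfolding l_def f(2) ginner_Pair by auto
    then show ?thesis by (metis cinner_commute ginner_commute)
  qed
  with f show ?thesis by blast
qed

lemma kadj_unique: assumes f1: "f1 \<in> BDG" and f2: "f2 \<in> BDG"
  and h: "\<forall>u\<in>BDG. ginner G u f1 = ginner G u f2" shows "f1 = f2"
proof -
  define d where "d = f1 - f2"
  have dB: "d \<in> BDG" unfolding d_def using csubspace_diff[OF BDG_sub f1 f2] .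
  have "ginner G d d = ginner G d f1 - ginner G d f2"
    unfolding d_def using ginner_diff_right[OF BDG_domG[OF f1] BDG_domG[OF f2]] by simp
  also have "\<dots> = 0"
  proof -
    have "ginner G d f1 = ginner G d f2" using h dB by blast
    then show ?thesis by (simp only: diff_self)
  qed
  finally have "d = 0" by (rule gnorm_zero_iff)
  then show ?thesis unfolding d_def by simp
qed

lemma kadj_eq: assumes f: "f \<in> BDG" and h: "\<forall>u\<in>BDG. cinner (\<kappa> u) \<psi> = ginner G u f"
  shows "kadj \<psi> = f"
  unfolding kappa_adj_def
proof (rule the_equality)
  show "f \<in> BDG \<and> (\<forall>u\<in>BDG. cinner (\<kappa> u) \<psi> = ginner G u f)" using f h by blast
  fix g assume g: "g \<in> BDG \<and> (\<forall>u\<in>BDG. cinner (\<kappa> u) \<psi> = ginner G u g)"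
  have "\<forall>u\<in>BDG. ginner G u g = ginner G u f"
  proof
    fix u assume u: "u \<in> BDG"
    have "cinner (\<kappa> u) \<psi> = ginner G u g" using g u by blast
    moreover have "cinner (\<kappa> u) \<psi> = ginner G u f" using h u by blast
    ultimately show "ginner G u g = ginner G u f" by simp
  qed
  then show "g = f" using kadj_unique[of g f] f g by blast
qed

lemma kadj_props: "kadj \<psi> \<in> BDG" "\<forall>u\<in>BDG. cinner (\<kappa> u) \<psi> = ginner G u (kadj \<psi>)"
proof -
  obtain f where f: "f \<in> BDG" "\<forall>u\<in>BDG. cinner (\<kappa> u) \<psi> = ginner G u f" using kadj_ex by blast
  have "kadj \<psi> = f" by (rule kadj_eq[OF f])
  then show "kadj \<psi> \<in> BDG" "\<forall>u\<in>BDG. cinner (\<kappa> u) \<psi> = ginner G u (kadj \<psi>)" using f by simp_all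
qed

lemma kadj_add: "kadj (\<psi>1 + \<psi>2) = kadj \<psi>1 + kadj \<psi>2"
proof (rule kadj_eq)
  show "kadj \<psi>1 + kadj \<psi>2 \<in> BDG" using csubspace_add[OF BDG_sub kadj_props(1) kadj_props(1)] .
  show "\<forall>u\<in>BDG. cinner (\<kappa> u) (\<psi>1 + \<psi>2) = ginner G u (kadj \<psi>1 + kadj \<psi>2)"
    using kadj_props(2) ginner_add_right[OF BDG_domG[OF kadj_props(1)] BDG_domG[OF kadj_props(1)]]
    by (simp add: cinner_add_right)
qed

lemma kadj_scaleC: "kadj (scaleC c \<psi>) = scaleC c (kadj \<psi>)"
proof (rule kadj_eq)
  show "scaleC c (kadj \<psi>) \<in> BDG" using csubspace_scaleC[OF BDG_sub kadj_props(1)] .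
  show "\<forall>u\<in>BDG. cinner (\<kappa> u) (scaleC c \<psi>) = ginner G u (scaleC c (kadj \<psi>))"
    using kadj_props(2) ginner_scaleC_right[OF BDG_domG[OF kadj_props(1)]]
    by (simp add: cinner_scaleC_right)
qed

lemma kadj_diff: "kadj (\<psi>1 - \<psi>2) = kadj \<psi>1 - kadj \<psi>2"
  using kadj_add[of \<psi>1 "scaleC (-1) \<psi>2"] kadj_scaleC[of "-1" \<psi>2] by (simp add: scaleC_minus1)

lemma kadj_bound: "\<exists>C\<ge>0. \<forall>\<psi>. gnorm G (kadj \<psi>) \<le> C * norm \<psi>"
proof -
  obtain C where C: "C \<ge> 0" "\<forall>x\<in>BDG. norm (\<kappa> x) \<le> C * gnorm G x" using kbound by blast
  have "gnorm G (kadj \<psi>) \<le> C * norm \<psi>" for \<psi>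
  proof -
    define f where "f = kadj \<psi>"
    have fB: "f \<in> BDG" unfolding f_def by (rule kadj_props(1))
    have "ginner G f f = cinner (\<kappa> f) \<psi>" using kadj_props(2) fB unfolding f_def by simp
    have "(gnorm G f)\<^sup>2 = (norm f)\<^sup>2 + (norm (G f))\<^sup>2" unfolding gnorm_Pair norm_Pair_sq ..
    also have "\<dots> = Re (ginner G f f)" unfolding ginner_self by simp
    also have "\<dots> = Re (cinner (\<kappa> f) \<psi>)" using \<open>ginner G f f = cinner (\<kappa> f) \<psi>\<close> by simp
    finally have "(gnorm G f)\<^sup>2 = Re (cinner (\<kappa> f) \<psi>)" .
    also have "\<dots> \<le> cmod (cinner (\<kappa> f) \<psi>)" by (rule complex_Re_le_cmod)
    also have "\<dots> \<le> norm (\<kappa> f) * norm \<psi>" by (rule cauchy_schwarz)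
    also have "\<dots> \<le> C * gnorm G f * norm \<psi>" using C fB by (simp add: mult_right_mono)
    finally have le: "gnorm G f * gnorm G f \<le> (C * norm \<psi>) * gnorm G f" by (simp add: power2_eq_square algebra_simps)
    show ?thesis
    proof (cases "gnorm G f = 0")
      case True then show ?thesis using C by (simp add: f_def)
    next
      case False
      moreover have "0 \<le> gnorm G f" by (simp add: gnorm_def)
      ultimately have "0 < gnorm G f" by linarith
      from mult_right_le_imp_le[OF le this] show ?thesis unfolding f_def .
    qed
  qed
  then show ?thesis using C by blast
qed

lemma kadj_zero: assumes "kadj \<psi> = 0" shows "\<psi> = 0"
proof (rule dense_orth_zero[OF kappa_dense])
  fix x assume "x \<in> \<kappa> ` BDG"
  then obtain u where u: "u \<in> BDG" "x = \<kappa> u" by blast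
  have "cinner (\<kappa> u) \<psi> = ginner G u (kadj \<psi>)" using kadj_props(2) u(1) by blast
  then have "cinner (\<kappa> u) \<psi> = ginner G u 0" unfolding assms .
  then show "cinner x \<psi> = 0" using u G_zero by (simp add: ginner_def)
qed

end

context setting
begin

lemma K1:
  assumes f: "f \<in> BDG"
  defines "bi \<equiv> block_inv domG G a m (f, - inv a (G f))"
  shows "fst bi \<in> domG" "snd bi \<in> Adom" "a (G (fst bi)) = snd bi + G f"
    "m (fst bi) + A (snd bi) = f" "gproj BDG G (fst bi) \<in> BDG"
    "DtN domG G domD D a m (gproj BDG G (fst bi)) = G f"
proof -
  obtain u q where bq: "bi = (u, q)" by fastforce
  have b1: "bi \<in> block_dom domG G" "block_op domG G a m bi = (f, - inv a (G f))"
    unfolding bi_def by (rule block_inv_props)+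
  then have dom: "(u, q) \<in> block_dom domG G" and eq: "block_op domG G a m (u, q) = (f, - inv a (G f))"
    unfolding bq by auto
  have uG: "u \<in> domG" and qA: "q \<in> Adom" using dom block_dom_iff by auto
  have e1: "m u + A q = f" and e2: "- G u + inv a q = - inv a (G f)"
    using eq unfolding block_op_Pair by auto
  have iq: "inv a q = G u - inv a (G f)" using e2 by (simp add: algebra_simps)
  have "q = a (inv a q)" by (simp add: a_inv1)
  also have "\<dots> = a (G u) - G f" unfolding iq a_diff a_inv1 ..
  finally have aGu: "a (G u) = q + G f" by simp
  have fD: "G f \<in> domD" "D (G f) = f" using BDG_D[OF f] by auto
  have qD: "q \<in> domD" using GD_dom[OF qA] .
  have aGuD: "a (G u) \<in> domD" unfolding aGu using csubspace_add[OF subD qD fD(1)] .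
  have "D (a (G u)) = D q + D (G f)" unfolding aGu using D_add[OF qD fD(1)] .
  also have "\<dots> = - A q + f" using GD_eq[OF qA] fD(2) by simp
  also have "\<dots> = m u" using e1 by (simp add: algebra_simps)
  finally have DaGu: "D (a (G u)) = m u" .
  define u0 where "u0 = gproj BDG G u"
  have u0B: "u0 \<in> BDG" and uu0: "u - u0 \<in> Bdom" using gprojG_props[OF uG] unfolding u0_def by auto
  have "sol u u0" unfolding sol_def using uG aGuD DaGu uu0 by simp
  then have ds: "dir_sol domG G domD D a m u0 = u" by (rule dir_sol_eq)
  have "DtN domG G domD D a m u0 = gproj BDD D (a (G u))" unfolding DtN_def ds ..
  also have "\<dots> = G f" by (rule gprojD[OF aGuD BDG_BDD[OF f]]) (use aGu qA in simp)
  finally have "DtN domG G domD D a m u0 = G f" .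
  then show "fst bi \<in> domG" "snd bi \<in> Adom" "a (G (fst bi)) = snd bi + G f"
    "m (fst bi) + A (snd bi) = f" "gproj BDG G (fst bi) \<in> BDG"
    "DtN domG G domD D a m (gproj BDG G (fst bi)) = G f"
    using uG qA aGu e1 u0B unfolding bq u0_def by auto
qed

lemma K1_est: "\<exists>\<mu>>0. \<forall>f\<in>BDG. \<mu> * gnorm G (fst (block_inv domG G a m (f, - inv a (G f)))) \<le> gnorm G f"
proof -
  obtain \<mu> where mu: "\<mu> > 0" "\<forall>x. \<mu> * (norm x)\<^sup>2 \<le> Re (cinner (Mp x) x)" using Mp_coercive by blast
  have "\<mu> * gnorm G (fst (block_inv domG G a m (f, - inv a (G f)))) \<le> gnorm G f" if f: "f \<in> BDG" for f
  proof -
    define u where "u = fst (block_inv domG G a m (f, - inv a (G f)))"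
    define q where "q = snd (block_inv domG G a m (f, - inv a (G f)))"
    have uG: "u \<in> domG" and qA: "q \<in> Adom" and aGu: "a (G u) = q + G f" and e1: "m u + A q = f"
      using K1[OF f] unfolding u_def q_def by auto
    have fG: "f \<in> domG" using BDG_domG[OF f] .
    have cq: "cinner q (G u) = cinner f u - cinner (m u) u"
    proof -
      have "cinner q (G u) = cnj (cinner (G u) q)" by (rule cinner_commute)
      also have "\<dots> = cnj (cinner u (A q))" using A_prop[OF qA uG] by simp
      also have "\<dots> = cinner (A q) u" by (metis cinner_commute)
      also have "A q = f - m u" using e1 by (simp add: algebra_simps)
      finally show ?thesis by (simp add: cinner_diff_left)
    qed
    define U where "U = (u, G u)"
    define F where "F = (f, G f)"
    have "cinner (Mp U) U = cinner (m u) u + cinner (a (G u)) (G u)"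
      unfolding U_def Mp_Pair cinner_Pair ..
    also have "\<dots> = cinner F U"
      unfolding aGu cinner_add_left cq F_def U_def cinner_Pair by simp
    finally have eqU: "cinner (Mp U) U = cinner F U" .
    have "\<mu> * (norm U)\<^sup>2 \<le> Re (cinner F U)" using mu(2) eqU by metis
    also have "\<dots> \<le> cmod (cinner F U)" by (rule complex_Re_le_cmod)
    also have "\<dots> \<le> norm F * norm U" by (rule cauchy_schwarz)
    finally have le: "\<mu> * norm U * norm U \<le> norm F * norm U" by (simp add: power2_eq_square mult.assoc)
    have "\<mu> * norm U \<le> norm F"
    proof (cases "norm U = 0")
      case True then show ?thesis by simp
    next
      case False
      then have "0 < norm U" by simp
      from mult_right_le_imp_le[OF le this] show ?thesis .
    qed
    then show ?thesis unfolding U_def F_def u_def gnorm_Pair .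
  qed
  then show ?thesis using mu(1) by blast
qed

lemma K2:
  assumes u0: "u0 \<in> BDG" and f: "f \<in> BDG" and dtn: "DtN domG G domD D a m u0 = G f"
  shows "gproj BDG G (fst (block_inv domG G a m (f, - inv a (G f)))) = u0"
proof -
  have u0G: "u0 \<in> domG" using BDG_domG[OF u0] .
  define u' where "u' = dir_sol domG G domD D a m u0"
  have s: "sol u' u0" unfolding u'_def by (rule dir_sol_props[OF u0G])
  have u'G: "u' \<in> domG" and zD: "a (G u') \<in> domD" and Dz: "D (a (G u')) = m u'" and uu0: "u' - u0 \<in> Bdom"
    using s unfolding sol_def by auto
  define z where "z = a (G u')"
  have "gproj BDD D z = G f" using dtn unfolding DtN_def u'_def[symmetric] z_def .
  then have q'A: "z - G f \<in> Adom" using gprojD_props(2)[OF zD[folded z_def]] by simp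
  define q' where "q' = z - G f"
  have fD: "G f \<in> domD" "D (G f) = f" using BDG_D[OF f] by auto
  have "D q' = m u' - f" unfolding q'_def using D_diff[OF zD[folded z_def] fD(1)] Dz fD(2) z_def by simp
  then have Aq: "A q' = f - m u'" using GD_eq[OF q'A[folded q'_def]] by (simp add: algebra_simps)
  have iq: "inv a q' = G u' - inv a (G f)" unfolding q'_def z_def ainv_diff a_inv2 ..
  have "block_op domG G a m (u', q') = (f, - inv a (G f))"
    unfolding block_op_Pair Aq iq by simp
  moreover have "(u', q') \<in> block_dom domG G" using u'G q'A block_dom_iff q'_def by simp
  ultimately have "block_inv domG G a m (f, - inv a (G f)) = (u', q')" using block_inv_eq by blast
  then show ?thesis using gprojG[OF u'G u0 uu0] by simp
qed

end

context setting_k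
begin

theorem main:
  "(\<forall>y. \<exists>!x. x \<in> block_dom domG G \<and> block_op domG G a m x = y)
    \<and> (\<exists>L. bounded_clinear_op L \<and> inj L
         \<and> (\<forall>\<phi> \<psi>. (\<phi>, \<psi>) \<in> DtN_H domG G domD D a m \<kappa> \<longleftrightarrow> \<phi> = L \<psi>)
         \<and> (\<forall>\<psi>. L \<psi> = \<kappa> (gproj (BD_G domG G domD D) G
              (fst (block_inv domG G a m
                 (kappa_adj domG G domD D \<kappa> \<psi>,
                  - inv a (G (kappa_adj domG G domD D \<kappa> \<psi>))))))))"
proof -
  have P1: "\<forall>y. \<exists>!x. x \<in> block_dom domG G \<and> block_op domG G a m x = y"
  proof
    fix y
    obtain x where x: "x \<in> block_dom domG G" "block_op domG G a m x = y" using block_exists by blast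
    show "\<exists>!x. x \<in> block_dom domG G \<and> block_op domG G a m x = y"
    proof (rule ex1I[of _ x])
      show "x \<in> block_dom domG G \<and> block_op domG G a m x = y" using x by blast
      fix x' assume "x' \<in> block_dom domG G \<and> block_op domG G a m x' = y"
      then show "x' = x" using block_unique x by metis
    qed
  qed
  define Y where "Y \<psi> = (kadj \<psi>, - inv a (G (kadj \<psi>)))" for \<psi>
  define U where "U \<psi> = fst (block_inv domG G a m (Y \<psi>))" for \<psi>
  define u0 where "u0 \<psi> = gproj BDG G (U \<psi>)" for \<psi>
  define L where "L \<psi> = \<kappa> (u0 \<psi>)" for \<psi>
  have fB: "kadj \<psi> \<in> BDG" for \<psi> by (rule kadj_props(1))
  have UG: "U \<psi> \<in> domG" for \<psi> unfolding U_def Y_def using K1(1)[OF fB] .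
  have u0B: "u0 \<psi> \<in> BDG" for \<psi> unfolding u0_def U_def Y_def using K1(5)[OF fB] .
  have dtn: "DtN domG G domD D a m (u0 \<psi>) = G (kadj \<psi>)" for \<psi>
    unfolding u0_def U_def Y_def using K1(6)[OF fB] .
  have char: "(\<phi>, \<psi>) \<in> DtN_H domG G domD D a m \<kappa> \<longleftrightarrow> \<phi> = L \<psi>" for \<phi> \<psi>
  proof
    assume "(\<phi>, \<psi>) \<in> DtN_H domG G domD D a m \<kappa>"
    then obtain v where v: "v \<in> BDG" "\<kappa> v = \<phi>" "DtN domG G domD D a m v = G (kadj \<psi>)"
      unfolding DtN_H_def by blast
    have "u0 \<psi> = v" unfolding u0_def U_def Y_def by (rule K2[OF v(1) fB v(3)])
    then show "\<phi> = L \<psi>" unfolding L_def using v(2) by simp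
  next
    assume "\<phi> = L \<psi>"
    then show "(\<phi>, \<psi>) \<in> DtN_H domG G domD D a m \<kappa>"
      unfolding DtN_H_def L_def using u0B dtn by blast
  qed
  have Yadd: "Y (\<psi>1 + \<psi>2) = Y \<psi>1 + Y \<psi>2" for \<psi>1 \<psi>2
    unfolding Y_def kadj_add G_add[OF BDG_domG[OF fB] BDG_domG[OF fB]] ainv_add by simp
  have Ysc: "Y (scaleC c \<psi>) = scaleC c (Y \<psi>)" for c \<psi>
    unfolding Y_def kadj_scaleC G_scaleC[OF BDG_domG[OF fB]] ainv_scaleC by (simp add: scaleC_minus_right)
  have Uadd: "U (\<psi>1 + \<psi>2) = U \<psi>1 + U \<psi>2" for \<psi>1 \<psi>2
    unfolding U_def Yadd block_inv_add by simp
  have Usc: "U (scaleC c \<psi>) = scaleC c (U \<psi>)" for c \<psi>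
    unfolding U_def Ysc block_inv_scaleC by (simp add: scaleC_prod_def)
  have u0add: "u0 (\<psi>1 + \<psi>2) = u0 \<psi>1 + u0 \<psi>2" for \<psi>1 \<psi>2
    unfolding u0_def Uadd using gproj_add[OF UG UG] .
  have u0sc: "u0 (scaleC c \<psi>) = scaleC c (u0 \<psi>)" for c \<psi>
    unfolding u0_def Usc using gproj_scaleC[OF UG] .
  have Ladd: "L (\<psi>1 + \<psi>2) = L \<psi>1 + L \<psi>2" for \<psi>1 \<psi>2
    unfolding L_def u0add using clinear_on_add[OF kappa_lin u0B u0B] .
  have Lsc: "L (scaleC c \<psi>) = scaleC c (L \<psi>)" for c \<psi>
    unfolding L_def u0sc using clinear_on_scaleC[OF kappa_lin u0B] .
  obtain Ck where Ck: "Ck \<ge> 0" "\<forall>x\<in>BDG. norm (\<kappa> x) \<le> Ck * gnorm G x" using kbound by blast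
  obtain Cf where Cf: "Cf \<ge> 0" "\<forall>\<psi>. gnorm G (kadj \<psi>) \<le> Cf * norm \<psi>" using kadj_bound by blast
  obtain \<mu> where mu: "\<mu> > 0" "\<forall>f\<in>BDG. \<mu> * gnorm G (fst (block_inv domG G a m (f, - inv a (G f)))) \<le> gnorm G f"
    using K1_est by blast
  have Lb: "norm (L \<psi>) \<le> (Ck * Cf / \<mu>) * norm \<psi>" for \<psi>
  proof -
    have "norm (L \<psi>) \<le> Ck * gnorm G (u0 \<psi>)" unfolding L_def using Ck u0B by blast
    also have "\<dots> \<le> Ck * gnorm G (U \<psi>)" unfolding u0_def using gproj_le[OF UG] Ck(1) by (rule mult_left_mono)
    also have "gnorm G (U \<psi>) \<le> gnorm G (kadj \<psi>) / \<mu>"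
      using mu fB[of \<psi>] unfolding U_def Y_def by (simp add: field_simps mult.commute)
    then have "Ck * gnorm G (U \<psi>) \<le> Ck * (gnorm G (kadj \<psi>) / \<mu>)" using Ck(1) by (rule mult_left_mono)
    also have "\<dots> \<le> Ck * (Cf * norm \<psi> / \<mu>)"
      using Cf mu(1) Ck(1) by (intro mult_left_mono divide_right_mono) auto
    finally show ?thesis by (simp add: field_simps)
  qed
  have bL: "bounded_clinear_op L"
    unfolding bounded_clinear_op_def clinear_on_def csubspace_def
    using Ladd Lsc Lb by blast
  have iL: "inj L"
  proof (rule injI)
    fix \<psi>1 \<psi>2 assume eq: "L \<psi>1 = L \<psi>2"
    then have "u0 \<psi>1 = u0 \<psi>2" unfolding L_def using kappa_inj u0B inj_on_def by metis
    then have "G (kadj \<psi>1) = G (kadj \<psi>2)" using dtn by metis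
    then have "D (G (kadj \<psi>1)) = D (G (kadj \<psi>2))" by simp
    then have "kadj \<psi>1 = kadj \<psi>2" using BDG_D(2)[OF fB] by simp
    then have "kadj (\<psi>1 - \<psi>2) = 0" unfolding kadj_diff by simp
    then have "\<psi>1 - \<psi>2 = 0" by (rule kadj_zero)
    then show "\<psi>1 = \<psi>2" by simp
  qed
  have Lform: "\<forall>\<psi>. L \<psi> = \<kappa> (gproj (BD_G domG G domD D) G
              (fst (block_inv domG G a m
                 (kappa_adj domG G domD D \<kappa> \<psi>,
                  - inv a (G (kappa_adj domG G domD D \<kappa> \<psi>))))))"
    unfolding L_def u0_def U_def Y_def by simp
  show ?thesis using P1 bL iL char Lform by blast
qed

end

theorem proposition3p7:
  fixes domG :: "'h0::chilbert_space set" and G :: "'h0 \<Rightarrow> 'h1::chilbert_space"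
    and domD :: "'h1 set" and D :: "'h1 \<Rightarrow> 'h0"
    and \<kappa> :: "'h0 \<Rightarrow> 'h::chilbert_space"
    and a :: "'h1 \<Rightarrow> 'h1" and m :: "'h0 \<Rightarrow> 'h0"
  assumes G: "densely_defined_closed domG G"
    and D: "densely_defined_closed domD D"
    and GD: "op_subset (adj_dom domG G) (\<lambda>y. - adj domG G y) domD D"
    and kappa_lin: "clinear_on (BD_G domG G domD D) \<kappa>"
    and kappa_bdd: "\<exists>C. \<forall>x\<in>BD_G domG G domD D. norm (\<kappa> x) \<le> C * gnorm G x"
    and kappa_inj: "inj_on \<kappa> (BD_G domG G domD D)"
    and kappa_dense: "closure (\<kappa> ` BD_G domG G domD D) = UNIV"
    and a: "bounded_clinear_op a" "coercive a"
    and m: "bounded_clinear_op m" "coercive m"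
  shows "(\<forall>y. \<exists>!x. x \<in> block_dom domG G \<and> block_op domG G a m x = y)
    \<and> (\<exists>L. bounded_clinear_op L \<and> inj L
         \<and> (\<forall>\<phi> \<psi>. (\<phi>, \<psi>) \<in> DtN_H domG G domD D a m \<kappa> \<longleftrightarrow> \<phi> = L \<psi>)
         \<and> (\<forall>\<psi>. L \<psi> = \<kappa> (gproj (BD_G domG G domD D) G
              (fst (block_inv domG G a m
                 (kappa_adj domG G domD D \<kappa> \<psi>,
                  - inv a (G (kappa_adj domG G domD D \<kappa> \<psi>))))))))"
proof -
  interpret setting_k domG G domD D a m \<kappa>
    by unfold_locales (rule G D GD kappa_lin kappa_bdd kappa_inj kappa_dense a m)+
  show ?thesis by (rule main)
qed

end
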